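(* Let $P=P(m_1,\dots,m_{n-1})$ be a natural unit interval order with $m_1=r$ for some $r\le n-1$ and $m_2=\cdots=m_{n-1}=n$, and let $G=\mathrm{inc}(P)$. Then $$X_G(\mathbf{x},t)=[n-2]_t!\left([n]_t[r-1]_t\,e_n+t^{r-1}[n-r]_t\,e_{(n-1,1)}\right).$$
   Context: A natural unit interval order $P(m_1,\dots,m_{n-1})$ is defined for integers $m_1\le\cdots\le m_{n-1}\le n$ with $m_i\ge i$: it is the poset on $[n]$ with $i<_P j$ iff $i<n$ and $j\in\{m_i+1,\dots,n\}$. Its incomparability graph has vertex set $[n]$ and an edge $\{i,j\}$ ($i<j$) iff $j\le m_i$. The chromatic quasisymmetric function of a graph $G$ on $V\subset\mathbb{P}$ is $X_G(\mathbf{x},t)=\sum_\kappa t^{\mathrm{asc}(\kappa)}\prod_v x_{\kappa(v)}$ over proper colorings $\kappa:V\to\mathbb{P}$, with $\mathrm{asc}(\kappa)$ the number of edges $\{i,j\}$, $i<j$, with $\kappa(i)<\kappa(j)$. $[m]_t=1+t+\cdots+t^{m-1}$, $[m]_t!=[1]_t\cdots[m]_t$; $e_\lambda$ denotes elementary symmetric functions. *)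

theory Defs
  imports "HOL-Computational_Algebra.Polynomial"
begin

text \<open>Symmetric / quasisymmetric functions in x_1, x_2, ... with coefficients in Z[t]
 are represented by their coefficient function: a monomial x^alpha is given by an
 exponent vector alpha :: nat => nat (finite support, alpha 0 = 0, variables indexed
 by positive integers), and the coefficient is an int poly in t.\<close>

definition monomial_exps :: "(nat \<Rightarrow> nat) set" where
  "monomial_exps = {\<alpha>. finite {i. \<alpha> i \<noteq> 0} \<and> \<alpha> 0 = 0}"

definition qint :: "nat \<Rightarrow> int poly" where
  "qint m = (\<Sum>i<m. monom 1 i)"

definition qfact :: "nat \<Rightarrow> int poly" where
  "qfact m = (\<Prod>i=1..m. qint i)"

text \<open>Graph on vertex set V given by edge predicate E i j (used for i < j).\<close>
definition proper_coloring :: "nat set \<Rightarrow> (nat \<Rightarrow> nat \<Rightarrow> bool) \<Rightarrow> (nat \<Rightarrow> nat) \<Rightarrow> bool" where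
  "proper_coloring V E \<kappa> \<longleftrightarrow>
     (\<forall>v\<in>V. 1 \<le> \<kappa> v) \<and> (\<forall>v. v \<notin> V \<longrightarrow> \<kappa> v = 0) \<and>
     (\<forall>i\<in>V. \<forall>j\<in>V. i < j \<and> E i j \<longrightarrow> \<kappa> i \<noteq> \<kappa> j)"

definition asc :: "nat set \<Rightarrow> (nat \<Rightarrow> nat \<Rightarrow> bool) \<Rightarrow> (nat \<Rightarrow> nat) \<Rightarrow> nat" where
  "asc V E \<kappa> = card {(i,j). i \<in> V \<and> j \<in> V \<and> i < j \<and> E i j \<and> \<kappa> i < \<kappa> j}"

text \<open>Coefficient of x^alpha in the chromatic quasisymmetric function X_G(x,t).\<close>
definition chrom_qsym :: "nat set \<Rightarrow> (nat \<Rightarrow> nat \<Rightarrow> bool) \<Rightarrow> (nat \<Rightarrow> nat) \<Rightarrow> int poly" where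
  "chrom_qsym V E \<alpha> =
     (\<Sum>\<kappa>\<in>{\<kappa>. proper_coloring V E \<kappa> \<and> (\<forall>i\<ge>1. card {v\<in>V. \<kappa> v = i} = \<alpha> i)}.
        monom 1 (asc V E \<kappa>))"

text \<open>Coefficient of x^alpha in e_lambda = e_{lambda_1} ... e_{lambda_k}: the number of
 tuples of sets of positive integers S_1..S_k with |S_k| = lambda_k whose indicator
 vectors sum to alpha.\<close>
definition e_sym :: "nat list \<Rightarrow> (nat \<Rightarrow> nat) \<Rightarrow> int poly" where
  "e_sym lam \<alpha> = of_nat (card {Ss :: nat set list. length Ss = length lam \<and>
      (\<forall>k<length lam. Ss!k \<subseteq> {1..} \<and> finite (Ss!k) \<and> card (Ss!k) = lam!k) \<and>
      (\<forall>i. \<alpha> i = length (filter (\<lambda>S. i \<in> S) Ss))})"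

text \<open>Incomparability graph of the natural unit interval order P(m_1,...,m_{n-1}):
 vertices {1..n}, edge {i,j} (i<j) iff j \<le> m_i.\<close>
definition nuio_edge :: "(nat \<Rightarrow> nat) \<Rightarrow> nat \<Rightarrow> nat \<Rightarrow> bool" where
  "nuio_edge m i j \<longleftrightarrow> i < j \<and> j \<le> m i"

end

theory Submission
  imports Defs
begin


lemma qint_add: "qint (a + b) = qint a + monom 1 a * qint b"
proof (induct b)
  case 0 then show ?case by (simp add: qint_def)
next
  case (Suc b)
  have "qint (a + Suc b) = qint (a + b) + monom 1 (a + b)" by (simp add: qint_def)
  also have "\<dots> = qint a + monom 1 a * (qint b + monom 1 b)"
    using Suc by (simp add: mult_monom distrib_left)
  also have "qint b + monom 1 b = qint (Suc b)" by (simp add: qint_def)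
  finally show ?case .
qed

lemma qint_0[simp]: "qint 0 = 0" by (simp add: qint_def)
lemma qint_1[simp]: "qint (Suc 0) = 1" by (simp add: qint_def lessThan_Suc)
lemma qint_Suc: "qint (Suc m) = 1 + monom 1 1 * qint m"
  using qint_add[of 1 m] by simp
lemma qfact_Suc: "qfact (Suc m) = qfact m * qint (Suc m)"
  by (simp add: qfact_def)
lemma qfact_0[simp]: "qfact 0 = 1" by (simp add: qfact_def)

lemma alg1: fixes F a b c Km X m :: "'a::comm_ring_1" assumes "b = 1 + X*a" "c = 1 + X*b"
 shows "(m+3)*(F*a*b) - F*a*(1+X*Km)*((m+3) - c) = F*a*b + X*(1+X*Km)*((m+2)*(F*a) - F*Km*((m+2)-b)) + (b - (1+X*Km))*((m+2)*(F*a) - F*(1+X*Km)*((m+2)-b))"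
  unfolding assms by (simp add: algebra_simps)
lemma alg0: fixes F a b c X m z :: "'a::comm_ring_1" assumes "b = 1 + X*a" "c = 1 + X*b"
 shows "(m+3)*(F*a*b) - F*a*0*((m+3) - c) = F*a*b + 0 + b*((m+2)*(F*a) - F*0*((m+2)-b))"
  unfolding assms by (simp add: algebra_simps)

definition FA :: "nat \<Rightarrow> nat \<Rightarrow> int poly" where
  "FA N k = of_nat (N+1) * qfact N - qfact (N - 1) * qint k * (of_nat (N+1) - qint (N+1))"

lemma FA_0: "FA 0 k = 1" by (simp add: FA_def)

lemma FA_rec:
  assumes "1 \<le> N" "k \<le> N"
  shows "FA N k = qfact N + monom 1 1 * qint k * FA (N-1) (k-1)
                + monom 1 k * qint (N-k) * FA (N-1) k"
proof (cases "N = 1")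
  case True
  have q2: "qint 2 = 1 + monom 1 1" "qint (Suc (Suc 0)) = 1 + monom 1 (Suc 0)" using qint_Suc[of 1] by (simp_all add: numeral_2_eq_2)
  have q1: "qfact 1 = 1" "qfact (Suc 0) = 1" unfolding qfact_def by simp_all
  have "k = 0 \<or> k = 1" using assms True by auto
  then show ?thesis
  proof
    assume k: "k = 0"
    show ?thesis by (simp add: k True FA_def q1)
  next
    assume k: "k = 1"
    show ?thesis by (simp add: k True FA_def q1 q2)
  qed
next
  case False
  obtain m where N: "N = m + 2" using assms False by (intro that[of "N-2"]) auto
  define X :: "int poly" where "X = monom 1 1"
  define M :: "int poly" where "M = of_nat m"
  define F where "F = qfact m"
  define a where "a = qint (Suc m)"
  define b where "b = qint (Suc (Suc m))"
  define c where "c = qint (Suc (Suc (Suc m)))"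
  have b: "b = 1 + X * a" by (simp add: b_def a_def X_def qint_Suc)
  have c: "c = 1 + X * b" by (simp add: c_def b_def X_def qint_Suc)
  have qf1: "qfact (N-1) = F * a" by (simp add: N F_def a_def qfact_Suc)
  have qf2: "qfact N = F * a * b" by (simp add: N F_def a_def b_def qfact_Suc)
  have FA1: "FA N k' = (M+3) * (F*a*b) - F * a * qint k' * ((M+3) - c)" for k'
  proof -
    have "of_nat (N+1) = M + (3::int poly)" by (simp add: N M_def)
    moreover have "qint (N+1) = c" by (simp add: N c_def)
    ultimately show ?thesis unfolding FA_def qf1 qf2 by (simp add: add.commute)
  qed
  have FA0: "FA (N-1) k' = (M+2) * (F*a) - F * qint k' * ((M+2) - b)" for k'
  proof -
    have "of_nat (N-1+1) = M + (2::int poly)" by (simp add: N M_def)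
    moreover have "qint (N-1+1) = b" by (simp add: N b_def)
    moreover have "qfact (N-1-1) = F" by (simp add: N F_def)
    ultimately show ?thesis unfolding FA_def qf1 by (simp add: add.commute)
  qed
  show ?thesis
  proof (cases k)
    case 0
    have Z: "monom 1 k * qint (N-k) = b" by (simp add: 0 N b_def)
    have e1: "FA N k = (M+3) * (F*a*b) - F * a * 0 * ((M+3) - c)" by (simp only: FA1 0 qint_0)
    have e3: "FA (N-1) k = (M+2) * (F*a) - F * 0 * ((M+2) - b)" by (simp only: FA0 0 qint_0)
    have e2: "monom 1 1 * qint k * FA (N-1) (k-1) = 0" by (simp add: 0)
    show ?thesis unfolding e1 e2 e3 Z qf2 by (rule alg0[OF b c])
  next
    case (Suc j)
    define Km where "Km = qint j"
    have Kk: "qint k = 1 + X * Km" by (simp add: Suc Km_def X_def qint_Suc)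
    have Z: "monom 1 k * qint (N-k) = b - (1 + X * Km)"
      using qint_add[of k "N-k"] assms Kk by (simp add: b_def N)
    have e1: "FA N k = (M+3) * (F*a*b) - F * a * (1 + X*Km) * ((M+3) - c)" by (simp only: FA1 Kk)
    have e2: "FA (N-1) (k-1) = (M+2) * (F*a) - F * Km * ((M+2) - b)"
      using FA0[of j] by (simp add: Suc Km_def)
    have e3: "FA (N-1) k = (M+2) * (F*a) - F * (1 + X*Km) * ((M+2) - b)" by (simp only: FA0 Kk)
    show ?thesis unfolding e1 e2 e3 Z qf2 X_def[symmetric] Kk by (rule alg1[OF b c])
  qed
qed


definition Bs :: "nat set \<Rightarrow> nat set \<Rightarrow> (nat \<Rightarrow> nat) set" where
  "Bs V S = {\<kappa>. bij_betw \<kappa> V S \<and> (\<forall>v. v \<notin> V \<longrightarrow> \<kappa> v = 0)}"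

definition rk :: "nat set \<Rightarrow> nat \<Rightarrow> nat" where
  "rk A p = card {a\<in>A. a < p}"

lemma Bs_in: "\<kappa> \<in> Bs V S \<Longrightarrow> v \<in> V \<Longrightarrow> \<kappa> v \<in> S"
  unfolding Bs_def bij_betw_def by auto
lemma Bs_out: "\<kappa> \<in> Bs V S \<Longrightarrow> v \<notin> V \<Longrightarrow> \<kappa> v = 0"
  unfolding Bs_def by auto

lemma finite_Bs: assumes "finite V" "finite S" shows "finite (Bs V S)"
proof -
  have "Bs V S \<subseteq> {f. \<forall>x. (x \<in> V \<longrightarrow> f x \<in> S) \<and> (x \<notin> V \<longrightarrow> f x = 0)}"
    using Bs_in Bs_out by blast
  then show ?thesis using finite_set_of_finite_funs[OF assms] finite_subset by blast
qed

lemma bij_upd: "bij_betw f A B \<Longrightarrow> x \<notin> A \<Longrightarrow> y \<notin> B \<Longrightarrow> bij_betw (f(x := y)) (insert x A) (insert y B)"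
  unfolding bij_betw_def inj_on_def by (auto simp: image_iff)

lemma bij_rem: "bij_betw f A B \<Longrightarrow> x \<in> A \<Longrightarrow> bij_betw (f(x := z)) (A - {x}) (B - {f x})"
  unfolding bij_betw_def inj_on_def by (auto simp: image_iff)

lemma sum_Sigma_reindex:
  assumes "finite P" "\<forall>p\<in>P. finite (Y p)" "inj_on h (Sigma P Y)" "X = h ` Sigma P Y"
  shows "sum f X = (\<Sum>p\<in>P. \<Sum>y\<in>Y p. f (h (p, y)))"
proof -
  have "sum f X = sum (f \<circ> h) (Sigma P Y)" using assms(3,4) by (simp add: sum.reindex)
  also have "\<dots> = (\<Sum>p\<in>P. \<Sum>y\<in>Y p. f (h (p, y)))"
    using assms(1,2) by (subst sum.Sigma) auto
  finally show ?thesis .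
qed

lemma Bs_decomp:
  assumes "M \<in> S"
  shows "Bs V S = (\<lambda>(p,\<kappa>). \<kappa>(p:=M)) ` Sigma V (\<lambda>p. Bs (V-{p}) (S-{M}))"
    and "inj_on (\<lambda>(p,\<kappa>). \<kappa>(p:=M)) (Sigma V (\<lambda>p. Bs (V-{p}) (S-{M})))"
proof -
  show "Bs V S = (\<lambda>(p,\<kappa>). \<kappa>(p:=M)) ` Sigma V (\<lambda>p. Bs (V-{p}) (S-{M}))"
  proof
    show "Bs V S \<subseteq> (\<lambda>(p,\<kappa>). \<kappa>(p:=M)) ` Sigma V (\<lambda>p. Bs (V-{p}) (S-{M}))"
    proof
      fix \<kappa> assume k: "\<kappa> \<in> Bs V S"
      then have b: "bij_betw \<kappa> V S" by (simp add: Bs_def)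
      then obtain p where p: "p \<in> V" "\<kappa> p = M" using assms unfolding bij_betw_def by auto
      have "bij_betw (\<kappa>(p:=0)) (V - {p}) (S - {M})" using bij_rem[OF b p(1)] p by simp
      moreover have "\<forall>v. v \<notin> V - {p} \<longrightarrow> (\<kappa>(p:=0)) v = 0" using k Bs_out by auto
      ultimately have "\<kappa>(p:=0) \<in> Bs (V-{p}) (S-{M})" by (simp add: Bs_def)
      moreover have "\<kappa> = (\<kappa>(p:=0))(p:=M)" using p by auto
      ultimately show "\<kappa> \<in> (\<lambda>(p,\<kappa>). \<kappa>(p:=M)) ` Sigma V (\<lambda>p. Bs (V-{p}) (S-{M}))"
        using p(1) by (auto intro!: image_eqI[where x="(p, \<kappa>(p:=0))"])
    qed
  next
    show "(\<lambda>(p,\<kappa>). \<kappa>(p:=M)) ` Sigma V (\<lambda>p. Bs (V-{p}) (S-{M})) \<subseteq> Bs V S"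
    proof clarify
      fix p \<kappa> assume p: "p \<in> V" and k: "\<kappa> \<in> Bs (V-{p}) (S-{M})"
      have "bij_betw (\<kappa>(p:=M)) (insert p (V-{p})) (insert M (S-{M}))"
        by (rule bij_upd) (use k in \<open>auto simp: Bs_def\<close>)
      then have "bij_betw (\<kappa>(p:=M)) V S" using p assms by (simp add: insert_absorb)
      moreover have "\<forall>v. v \<notin> V \<longrightarrow> (\<kappa>(p:=M)) v = 0" using k Bs_out p by auto
      ultimately show "\<kappa>(p:=M) \<in> Bs V S" by (simp add: Bs_def)
    qed
  qed
  show "inj_on (\<lambda>(p,\<kappa>). \<kappa>(p:=M)) (Sigma V (\<lambda>p. Bs (V-{p}) (S-{M})))"
  proof (rule inj_onI, clarify)
    fix p1 k1 p2 k2
    assume p1: "p1 \<in> V" "k1 \<in> Bs (V-{p1}) (S-{M})" and p2: "p2 \<in> V" "k2 \<in> Bs (V-{p2}) (S-{M})"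
      and eq: "k1(p1:=M) = k2(p2:=M)"
    have "p1 = p2"
    proof (rule ccontr)
      assume "p1 \<noteq> p2"
      then have "k2 p1 = M" using fun_cong[OF eq, of p1] by simp
      moreover have "k2 p1 \<in> S - {M}" using Bs_in[OF p2(2)] p1 \<open>p1 \<noteq> p2\<close> by auto
      ultimately show False by simp
    qed
    moreover have "k1 = k2"
    proof
      fix v show "k1 v = k2 v"
        using fun_cong[OF eq, of v] Bs_out[OF p1(2), of p1] Bs_out[OF p2(2), of p2] \<open>p1 = p2\<close>
        by (cases "v = p1") auto
    qed
    ultimately show "p1 = p2 \<and> k1 = k2" by simp
  qed
qed

lemma Bs_sum:
  assumes "M \<in> S" "finite V" "finite S"
  shows "(\<Sum>\<kappa>\<in>Bs V S. f \<kappa>) = (\<Sum>p\<in>V. \<Sum>\<kappa>\<in>Bs (V-{p}) (S-{M}). f (\<kappa>(p:=M)))"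
  using sum_Sigma_reindex[OF assms(2) _ Bs_decomp(2)[OF assms(1)] Bs_decomp(1)[OF assms(1)], of f]
    finite_Bs assms by simp

lemma asc_cong: "(\<forall>v\<in>V. \<kappa> v = \<kappa>' v) \<Longrightarrow> asc V E \<kappa> = asc V E \<kappa>'"
  unfolding asc_def by (rule arg_cong[where f=card]) auto

lemma asc_remove:
  assumes "finite V" "p \<in> V"
  shows "asc V E \<kappa> = asc (V-{p}) E \<kappa> + card {i\<in>V. i<p \<and> E i p \<and> \<kappa> i < \<kappa> p}
            + card {j\<in>V. p<j \<and> E p j \<and> \<kappa> p < \<kappa> j}"
proof -
  define A where "A = {(i,j). i \<in> V-{p} \<and> j \<in> V-{p} \<and> i < j \<and> E i j \<and> \<kappa> i < \<kappa> j}"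
  define I where "I = {i\<in>V. i<p \<and> E i p \<and> \<kappa> i < \<kappa> p}"
  define J where "J = {j\<in>V. p<j \<and> E p j \<and> \<kappa> p < \<kappa> j}"
  have eq: "{(i,j). i \<in> V \<and> j \<in> V \<and> i < j \<and> E i j \<and> \<kappa> i < \<kappa> j}
        = A \<union> ((\<lambda>i. (i,p)) ` I \<union> (\<lambda>j. (p,j)) ` J)"
    unfolding A_def I_def J_def using assms(2) by auto
  have fA: "finite A" unfolding A_def
    by (rule finite_subset[of _ "V \<times> V"]) (use assms in auto)
  have fI: "finite I" "finite J" unfolding I_def J_def using assms by auto
  have "card (A \<union> ((\<lambda>i. (i,p)) ` I \<union> (\<lambda>j. (p,j)) ` J))
      = card A + card ((\<lambda>i. (i,p)) ` I \<union> (\<lambda>j. (p,j)) ` J)"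
    by (rule card_Un_disjoint) (use fA fI in \<open>auto simp: A_def\<close>)
  also have "card ((\<lambda>i. (i,p)) ` I \<union> (\<lambda>j. (p,j)) ` J) = card ((\<lambda>i. (i,p)) ` I) + card ((\<lambda>j. (p,j)) ` J)"
    by (rule card_Un_disjoint) (use fI in \<open>auto simp: I_def J_def\<close>)
  also have "card ((\<lambda>i. (i,p)) ` I) = card I" by (rule card_image) (auto simp: inj_on_def)
  also have "card ((\<lambda>j. (p,j)) ` J) = card J" by (rule card_image) (auto simp: inj_on_def)
  finally show ?thesis unfolding asc_def eq A_def I_def J_def by simp
qed

lemma rk_bij: assumes "finite A" shows "bij_betw (rk A) A {..<card A}"
proof -
  have mono: "rk A p < rk A q" if "p \<in> A" "q \<in> A" "p < q" for p q
  proof -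
    have "{a\<in>A. a < p} \<subset> {a\<in>A. a < q}" using that by auto
    then show ?thesis unfolding rk_def by (rule psubset_card_mono[rotated]) (use assms in auto)
  qed
  have inj: "inj_on (rk A) A"
  proof (rule inj_onI)
    fix p q assume "p \<in> A" "q \<in> A" "rk A p = rk A q"
    then show "p = q" using mono[of p q] mono[of q p] by (cases "p < q"; cases "q < p") auto
  qed
  have sub: "rk A ` A \<subseteq> {..<card A}"
  proof
    fix x assume "x \<in> rk A ` A"
    then obtain p where p: "p \<in> A" "x = rk A p" by auto
    have "{a\<in>A. a < p} \<subset> A" using p by auto
    then show "x \<in> {..<card A}" using p assms unfolding rk_def by (auto intro: psubset_card_mono)
  qed
  have "card (rk A ` A) = card {..<card A}" using card_image[OF inj] by simp
  then have "rk A ` A = {..<card A}" using sub by (intro card_subset_eq) auto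
  then show ?thesis using inj by (simp add: bij_betw_def)
qed

lemma rk_sum: "finite A \<Longrightarrow> (\<Sum>p\<in>A. monom 1 (rk A p)) = qint (card A)"
  unfolding qint_def using sum.reindex_bij_betw[OF rk_bij, of A "\<lambda>i. monom 1 i"] by simp

lemma rk_low:
  assumes "finite W"
  shows "(\<Sum>p\<in>{w\<in>W. w \<le> r}. monom 1 (rk W p)) = qint (card {w\<in>W. w \<le> r})"
proof -
  have "rk W p = rk {w\<in>W. w \<le> r} p" if "p \<in> {w\<in>W. w \<le> r}" for p
    unfolding rk_def using that by (intro arg_cong[where f=card]) auto
  then have "(\<Sum>p\<in>{w\<in>W. w \<le> r}. monom 1 (rk W p)) = (\<Sum>p\<in>{w\<in>W. w \<le> r}. monom 1 (rk {w\<in>W. w \<le> r} p))"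
    by (intro sum.cong) auto
  also have "\<dots> = qint (card {w\<in>W. w \<le> r})" by (rule rk_sum) (use assms in auto)
  finally show ?thesis .
qed

lemma card_low_high: "finite (W::nat set) \<Longrightarrow> card {w\<in>W. r < w} = card W - card {w\<in>W. w \<le> r}"
proof -
  assume f: "finite W"
  have "card W = card ({w\<in>W. w \<le> r} \<union> {w\<in>W. r < w})" by (rule arg_cong[where f=card]) auto
  also have "\<dots> = card {w\<in>W. w \<le> r} + card {w\<in>W. r < w}" by (rule card_Un_disjoint) (use f in auto)
  finally show ?thesis by simp
qed

lemma rk_high:
  assumes "finite W"
  shows "(\<Sum>p\<in>{w\<in>W. r < w}. monom 1 (rk W p)) =
      monom 1 (card {w\<in>W. w \<le> r}) * qint (card W - card {w\<in>W. w \<le> r})"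
proof -
  have "rk W p = card {w\<in>W. w \<le> r} + rk {w\<in>W. r < w} p" if "p \<in> {w\<in>W. r < w}" for p
  proof -
    have "card {a\<in>W. a < p} = card ({w\<in>W. w \<le> r} \<union> {a\<in>{w\<in>W. r < w}. a < p})"
      by (rule arg_cong[where f=card]) (use that in auto)
    also have "\<dots> = card {w\<in>W. w \<le> r} + card {a\<in>{w\<in>W. r < w}. a < p}"
      by (rule card_Un_disjoint) (use assms in auto)
    finally show ?thesis unfolding rk_def .
  qed
  then have "(\<Sum>p\<in>{w\<in>W. r < w}. monom 1 (rk W p)) =
     (\<Sum>p\<in>{w\<in>W. r < w}. monom 1 (card {w\<in>W. w \<le> r}) * (monom 1 (rk {w\<in>W. r < w} p) :: int poly))"
    by (intro sum.cong) (auto simp: mult_monom)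
  also have "\<dots> = monom 1 (card {w\<in>W. w \<le> r}) * qint (card {w\<in>W. r < w})"
    by (subst sum_distrib_left[symmetric], subst rk_sum) (use assms in auto)
  finally show ?thesis using card_low_high[OF assms] by simp
qed



definition gE :: "nat \<Rightarrow> nat \<Rightarrow> nat \<Rightarrow> bool" where
  "gE r i j \<longleftrightarrow> i < j \<and> (i = 1 \<longrightarrow> j \<le> r)"

lemma asc_top_clique:
  assumes "finite W" "p \<in> W" "\<forall>i\<in>W. \<forall>j\<in>W. i<j \<longrightarrow> E i j" "\<forall>i\<in>W-{p}. \<kappa> i < M"
  shows "asc W E (\<kappa>(p:=M)) = asc (W-{p}) E \<kappa> + rk W p"
proof -
  have c1: "{i\<in>W. i<p \<and> E i p \<and> (\<kappa>(p:=M)) i < (\<kappa>(p:=M)) p} = {a\<in>W. a<p}"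
    using assms(2-4) by auto
  have c2: "{j\<in>W. p<j \<and> E p j \<and> (\<kappa>(p:=M)) p < (\<kappa>(p:=M)) j} = {}"
  proof -
    { fix j assume j: "j \<in> W" "p < j" "(\<kappa>(p:=M)) p < (\<kappa>(p:=M)) j"
      then have "j \<noteq> p" by simp
      then have "\<kappa> j < M" using assms(4) j(1) by blast
      then have False using j(3) \<open>j \<noteq> p\<close> by simp }
    then show ?thesis by blast
  qed
  have e0: "asc (W-{p}) E (\<kappa>(p:=M)) = asc (W-{p}) E \<kappa>" by (rule asc_cong) auto
  note e = asc_remove[OF assms(1,2), of E "\<kappa>(p:=M)"]
  show ?thesis unfolding e c1 c2 card.empty e0 by (simp add: rk_def)
qed

lemma asc_top1:
  assumes "finite V" "1 \<in> V" "0 \<notin> V" "\<forall>j\<in>V-{1}. \<kappa> j \<le> \<kappa> 1"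
  shows "asc V (gE r) \<kappa> = asc (V-{1}) (gE r) \<kappa>"
proof -
  have c1: "{i\<in>V. i<1 \<and> gE r i 1 \<and> \<kappa> i < \<kappa> 1} = {}" using assms(3) by auto
  have c2: "{j\<in>V. 1<j \<and> gE r 1 j \<and> \<kappa> 1 < \<kappa> j} = {}"
  proof -
    { fix j assume j: "j \<in> V" "1 < j" "\<kappa> 1 < \<kappa> j"
      then have "j \<in> V - {1}" by simp
      then have "\<kappa> j \<le> \<kappa> 1" using assms(4) by blast
      then have False using j(3) by simp }
    then show ?thesis by blast
  qed
  note e = asc_remove[OF assms(1,2), of "gE r" \<kappa>]
  show ?thesis unfolding e c1 c2 card.empty by simp
qed

lemma asc_top:
  assumes "finite V" "1 \<in> V" "0 \<notin> V" "p \<in> V" "p \<noteq> 1" "\<forall>i\<in>V-{p}. \<kappa> i < M"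
  shows "asc V (gE r) (\<kappa>(p:=M)) = asc (V-{p}) (gE r) \<kappa> + rk (V-{1}) p + (if p \<le> r then 1 else 0)"
proof -
  have p1: "1 < p" using assms(3,4,5) by (cases p) auto
  have c1: "{i\<in>V. i<p \<and> gE r i p \<and> (\<kappa>(p:=M)) i < (\<kappa>(p:=M)) p}
      = (if p \<le> r then insert 1 {a\<in>V-{1}. a<p} else {a\<in>V-{1}. a<p})"
    using assms(2,6) p1 by (auto simp: gE_def)
  have c1': "card {i\<in>V. i<p \<and> gE r i p \<and> (\<kappa>(p:=M)) i < (\<kappa>(p:=M)) p}
      = rk (V-{1}) p + (if p \<le> r then 1 else 0)"
    unfolding c1 rk_def using assms(1) by auto
  have c2: "{j\<in>V. p<j \<and> gE r p j \<and> (\<kappa>(p:=M)) p < (\<kappa>(p:=M)) j} = {}"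
  proof -
    { fix j assume j: "j \<in> V" "p < j" "(\<kappa>(p:=M)) p < (\<kappa>(p:=M)) j"
      then have "j \<noteq> p" by simp
      then have "\<kappa> j < M" using assms(6) j(1) by blast
      then have False using j(3) \<open>j \<noteq> p\<close> by simp }
    then show ?thesis by blast
  qed
  have e0: "asc (V-{p}) (gE r) (\<kappa>(p:=M)) = asc (V-{p}) (gE r) \<kappa>" by (rule asc_cong) auto
  note e = asc_remove[OF assms(1,4), of "gE r" "\<kappa>(p:=M)"]
  show ?thesis unfolding e c1' c2 card.empty e0 by simp
qed

lemma Bs_lt_Max:
  assumes "finite S" "\<kappa> \<in> Bs V (S - {Max S})" "i \<in> V"
  shows "\<kappa> i < Max S"
proof -
  have "\<kappa> i \<in> S - {Max S}" using Bs_in[OF assms(2,3)] .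
  then show ?thesis using Max_ge[OF assms(1)] by fastforce
qed

lemma Bs_empty: "Bs {} {} = {\<lambda>_. 0}"
  by (auto simp: Bs_def bij_betw_def)

lemma clique:
  fixes E :: "nat \<Rightarrow> nat \<Rightarrow> bool"
  assumes "finite W" "finite S" "card W = card S" "\<forall>i\<in>W. \<forall>j\<in>W. i<j \<longrightarrow> E i j"
  shows "(\<Sum>\<kappa>\<in>Bs W S. monom 1 (asc W E \<kappa>)) = qfact (card W)"
  using assms
proof (induct "card W" arbitrary: W S)
  case 0
  then have W: "W = {}" "S = {}" by auto
  show ?case by (simp add: W Bs_empty asc_def)
next
  case (Suc N W S)
  have "S \<noteq> {}" using Suc by auto
  have cS: "card S = Suc N" using Suc by simp
  define M where "M = Max S"
  have M: "M \<in> S" using Suc \<open>S \<noteq> {}\<close> by (simp add: M_def)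
  have inner: "(\<Sum>\<kappa>\<in>Bs (W-{p}) (S-{M}). monom 1 (asc W E (\<kappa>(p:=M)))) = monom 1 (rk W p) * qfact N"
    if p: "p \<in> W" for p
  proof -
    have "(\<Sum>\<kappa>\<in>Bs (W-{p}) (S-{M}). monom 1 (asc W E (\<kappa>(p:=M))) :: int poly)
        = (\<Sum>\<kappa>\<in>Bs (W-{p}) (S-{M}). monom 1 (rk W p) * monom 1 (asc (W-{p}) E \<kappa>))"
    proof (intro sum.cong refl)
      fix \<kappa> assume k: "\<kappa> \<in> Bs (W-{p}) (S-{M})"
      have "\<forall>i\<in>W-{p}. \<kappa> i < M" using Bs_lt_Max[OF Suc.prems(2)] k unfolding M_def by blast
      then show "monom 1 (asc W E (\<kappa>(p:=M))) = monom 1 (rk W p) * (monom 1 (asc (W-{p}) E \<kappa>) :: int poly)"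
        using asc_top_clique[OF Suc.prems(1) p Suc.prems(4)] by (simp add: mult_monom add.commute)
    qed
    also have "\<dots> = monom 1 (rk W p) * (\<Sum>\<kappa>\<in>Bs (W-{p}) (S-{M}). monom 1 (asc (W-{p}) E \<kappa>))"
      by (simp add: sum_distrib_left)
    also have "(\<Sum>\<kappa>\<in>Bs (W-{p}) (S-{M}). monom 1 (asc (W-{p}) E \<kappa>)) = qfact N"
    proof -
      have c1: "card (W-{p}) = N" using Suc.hyps(2) p Suc.prems(1) by simp
      have c2: "card (S-{M}) = N" using cS M Suc.prems(2) by simp
      have cl: "\<forall>i\<in>W-{p}. \<forall>j\<in>W-{p}. i<j \<longrightarrow> E i j" using Suc.prems(4) by blast
      have "(\<Sum>\<kappa>\<in>Bs (W-{p}) (S-{M}). monom 1 (asc (W-{p}) E \<kappa>)) = qfact (card (W-{p}))"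
        by (rule Suc.hyps(1)) (use c1 c2 cl Suc.prems(1,2) in auto)
      then show ?thesis using c1 by simp
    qed
    finally show ?thesis .
  qed
  have "(\<Sum>\<kappa>\<in>Bs W S. monom 1 (asc W E \<kappa>)) =
      (\<Sum>p\<in>W. \<Sum>\<kappa>\<in>Bs (W-{p}) (S-{M}). monom 1 (asc W E (\<kappa>(p:=M))))"
    by (rule Bs_sum[OF M Suc.prems(1,2)])
  also have "\<dots> = (\<Sum>p\<in>W. monom 1 (rk W p) * qfact N)"
    by (rule sum.cong) (simp_all add: inner)
  also have "\<dots> = qint (card W) * qfact N"
    by (simp add: sum_distrib_right[symmetric] rk_sum Suc.prems(1))
  also have "\<dots> = qfact (card W)" using Suc.hyps(2)[symmetric] by (simp add: qfact_Suc mult.commute)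
  finally show ?case .
qed



lemma split_low_high:
  fixes W :: "nat set"
  assumes "finite W"
  shows "(\<Sum>p\<in>W. g p) = (\<Sum>p\<in>{w\<in>W. w \<le> r}. g p) + (\<Sum>p\<in>{w\<in>W. r < w}. g p)"
proof -
  have "W = {w\<in>W. w \<le> r} \<union> {w\<in>W. r < w}" by auto
  then have "(\<Sum>p\<in>W. g p) = (\<Sum>p\<in>{w\<in>W. w \<le> r} \<union> {w\<in>W. r < w}. g p)" by simp
  also have "\<dots> = (\<Sum>p\<in>{w\<in>W. w \<le> r}. g p) + (\<Sum>p\<in>{w\<in>W. r < w}. g p)"
    by (rule sum.union_disjoint) (use assms in auto)
  finally show ?thesis .
qed

lemma card_low_rem:
  fixes W :: "nat set"
  assumes "finite W" "p \<in> W"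
  shows "card {w\<in>W-{p}. w \<le> r} = (if p \<le> r then card {w\<in>W. w \<le> r} - 1 else card {w\<in>W. w \<le> r})"
proof -
  have "{w\<in>W-{p}. w \<le> r} = {w\<in>W. w \<le> r} - {p}" by auto
  then show ?thesis using assms by auto
qed

lemma LA:
  assumes "finite V" "1 \<in> V" "0 \<notin> V" "finite S" "card S = card V"
  shows "(\<Sum>\<kappa>\<in>Bs V S. monom 1 (asc V (gE r) \<kappa>)) = FA (card V - 1) (card {w\<in>V-{1}. w \<le> r})"
  using assms
proof (induct "card V" arbitrary: V S rule: less_induct)
  case less
  define W where "W = V - {1}"
  define N where "N = card V - 1"
  define k where "k = card {w\<in>W. w \<le> r}"
  have fW: "finite W" using less.prems(1) by (simp add: W_def)
  have cW: "card W = N" using less.prems(1,2) by (simp add: W_def N_def)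
  have "S \<noteq> {}" using less.prems by auto
  define M where "M = Max S"
  have M: "M \<in> S" using less.prems(4) \<open>S \<noteq> {}\<close> by (simp add: M_def)
  have cSM: "card (S - {M}) = N" using less.prems(4,5) M by (simp add: N_def)
  have lt: "\<kappa> i < M" if "\<kappa> \<in> Bs U (S - {M})" "i \<in> U" for \<kappa> U i
    using Bs_lt_Max[OF less.prems(4)] that unfolding M_def by blast
  have kN: "k \<le> N" unfolding k_def cW[symmetric] by (rule card_mono[OF fW]) auto
  have T1: "(\<Sum>\<kappa>\<in>Bs (V-{1}) (S-{M}). monom 1 (asc V (gE r) (\<kappa>(1:=M)))) = qfact N"
  proof -
    have "(\<Sum>\<kappa>\<in>Bs W (S-{M}). monom 1 (asc V (gE r) (\<kappa>(1:=M))) :: int poly)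
        = (\<Sum>\<kappa>\<in>Bs W (S-{M}). monom 1 (asc W (gE r) \<kappa>))"
    proof (intro sum.cong refl)
      fix \<kappa> assume k: "\<kappa> \<in> Bs W (S-{M})"
      have "asc V (gE r) (\<kappa>(1:=M)) = asc W (gE r) (\<kappa>(1:=M))"
        unfolding W_def
        by (rule asc_top1) (use less.prems lt[OF k] in \<open>auto simp: W_def less_imp_le\<close>)
      also have "\<dots> = asc W (gE r) \<kappa>" by (rule asc_cong) (auto simp: W_def)
      finally show "monom 1 (asc V (gE r) (\<kappa>(1:=M))) = (monom 1 (asc W (gE r) \<kappa>) :: int poly)" by simp
    qed
    also have "\<dots> = qfact (card W)"
      by (rule clique) (use fW less.prems(4) cW cSM in \<open>auto simp: gE_def W_def\<close>)
    finally show ?thesis using cW by (simp add: W_def)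
  qed
  have T2: "(\<Sum>\<kappa>\<in>Bs (V-{p}) (S-{M}). monom 1 (asc V (gE r) (\<kappa>(p:=M))))
      = monom 1 (rk W p + (if p \<le> r then 1 else 0)) * FA (N - 1) (if p \<le> r then k - 1 else k)"
    if p: "p \<in> W" for p
  proof -
    have pV: "p \<in> V" "p \<noteq> 1" using p by (auto simp: W_def)
    have "(\<Sum>\<kappa>\<in>Bs (V-{p}) (S-{M}). monom 1 (asc V (gE r) (\<kappa>(p:=M))) :: int poly)
        = (\<Sum>\<kappa>\<in>Bs (V-{p}) (S-{M}). monom 1 (rk W p + (if p \<le> r then 1 else 0)) * monom 1 (asc (V-{p}) (gE r) \<kappa>))"
    proof (intro sum.cong refl)
      fix \<kappa> assume k: "\<kappa> \<in> Bs (V-{p}) (S-{M})"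
      have "asc V (gE r) (\<kappa>(p:=M)) = asc (V-{p}) (gE r) \<kappa> + rk W p + (if p \<le> r then 1 else 0)"
      proof -
        have "\<forall>i\<in>V-{p}. \<kappa> i < M" using lt[OF k] by blast
        then show ?thesis unfolding W_def by (rule asc_top[OF less.prems(1,2,3) pV])
      qed
      then show "monom 1 (asc V (gE r) (\<kappa>(p:=M))) = monom 1 (rk W p + (if p \<le> r then 1 else 0)) * (monom 1 (asc (V-{p}) (gE r) \<kappa>) :: int poly)"
        by (simp add: mult_monom add.commute add.left_commute)
    qed
    also have "\<dots> = monom 1 (rk W p + (if p \<le> r then 1 else 0)) * (\<Sum>\<kappa>\<in>Bs (V-{p}) (S-{M}). monom 1 (asc (V-{p}) (gE r) \<kappa>))"
      by (simp add: sum_distrib_left)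
    also have "(\<Sum>\<kappa>\<in>Bs (V-{p}) (S-{M}). monom 1 (asc (V-{p}) (gE r) \<kappa>))
        = FA (card (V-{p}) - 1) (card {w\<in>V-{p}-{1}. w \<le> r})"
    proof (rule less.hyps)
      have "card V > 0" using pV less.prems(1) card_gt_0_iff by blast
      then show "card (V - {p}) < card V" using pV less.prems(1) by simp
    qed (use less.prems pV cSM cW in \<open>auto simp: W_def N_def\<close>)
    also have "card (V-{p}) - 1 = N - 1" using pV less.prems(1) by (simp add: N_def)
    also have "card {w\<in>V-{p}-{1}. w \<le> r} = (if p \<le> r then k - 1 else k)"
    proof -
      have "V-{p}-{1} = W-{p}" by (auto simp: W_def)
      then show ?thesis using card_low_rem[OF fW p, of r] by (simp add: k_def)
    qed
    finally show ?thesis .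
  qed
  have "(\<Sum>\<kappa>\<in>Bs V S. monom 1 (asc V (gE r) \<kappa>)) =
      (\<Sum>p\<in>V. \<Sum>\<kappa>\<in>Bs (V-{p}) (S-{M}). monom 1 (asc V (gE r) (\<kappa>(p:=M))))"
    by (rule Bs_sum[OF M less.prems(1,4)])
  also have "\<dots> = (\<Sum>\<kappa>\<in>Bs (V-{1}) (S-{M}). monom 1 (asc V (gE r) (\<kappa>(1:=M))))
      + (\<Sum>p\<in>V-{1}. \<Sum>\<kappa>\<in>Bs (V-{p}) (S-{M}). monom 1 (asc V (gE r) (\<kappa>(p:=M))))"
    by (rule sum.remove[OF less.prems(1,2)])
  also have "\<dots> = qfact N + (\<Sum>p\<in>W. \<Sum>\<kappa>\<in>Bs (V-{p}) (S-{M}). monom 1 (asc V (gE r) (\<kappa>(p:=M))))"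
    unfolding T1 W_def ..
  also have "(\<Sum>p\<in>W. \<Sum>\<kappa>\<in>Bs (V-{p}) (S-{M}). monom 1 (asc V (gE r) (\<kappa>(p:=M))))
      = (\<Sum>p\<in>W. monom 1 (rk W p + (if p \<le> r then 1 else 0)) * FA (N - 1) (if p \<le> r then k - 1 else k))"
    by (rule sum.cong) (simp_all add: T2)
  also have "\<dots> = (\<Sum>p\<in>{w\<in>W. w \<le> r}. monom 1 (rk W p + (if p \<le> r then 1 else 0)) * FA (N - 1) (if p \<le> r then k - 1 else k))
     + (\<Sum>p\<in>{w\<in>W. r < w}. monom 1 (rk W p + (if p \<le> r then 1 else 0)) * FA (N - 1) (if p \<le> r then k - 1 else k))"
    by (rule split_low_high[OF fW])
  also have "(\<Sum>p\<in>{w\<in>W. w \<le> r}. monom 1 (rk W p + (if p \<le> r then 1 else 0)) * FA (N - 1) (if p \<le> r then k - 1 else k))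
      = (\<Sum>p\<in>{w\<in>W. w \<le> r}. monom 1 1 * monom 1 (rk W p) * FA (N - 1) (k - 1))"
    by (rule sum.cong) (simp_all add: mult_monom)
  also have "\<dots> = monom 1 1 * qint k * FA (N - 1) (k - 1)"
    using rk_low[OF fW, of r] by (simp add: sum_distrib_left[symmetric] sum_distrib_right[symmetric] k_def)
  also have "(\<Sum>p\<in>{w\<in>W. r < w}. monom 1 (rk W p + (if p \<le> r then 1 else 0)) * FA (N - 1) (if p \<le> r then k - 1 else k))
      = (\<Sum>p\<in>{w\<in>W. r < w}. monom 1 (rk W p) * FA (N - 1) k)"
    by (rule sum.cong) auto
  also have "\<dots> = monom 1 k * qint (N - k) * FA (N - 1) k"
    using rk_high[OF fW, of r] by (simp add: sum_distrib_right[symmetric] k_def cW)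
  finally have main: "(\<Sum>\<kappa>\<in>Bs V S. monom 1 (asc V (gE r) \<kappa>)) =
      qfact N + monom 1 1 * qint k * FA (N - 1) (k - 1) + monom 1 k * qint (N - k) * FA (N - 1) k"
    by (simp add: add.assoc)
  have g: "FA (card V - 1) (card {w\<in>V-{1}. w \<le> r}) = FA N k" by (simp add: N_def k_def W_def)
  show ?case
  proof (cases "N = 0")
    case True
    then have "k = 0" using kN by simp
    then show ?thesis unfolding g main using True by (simp add: FA_0)
  next
    case False
    then show ?thesis unfolding g main using FA_rec[of N k] kN by simp
  qed
qed



definition CB :: "nat \<Rightarrow> nat set \<Rightarrow> nat set \<Rightarrow> nat \<Rightarrow> (nat \<Rightarrow> nat) set" where
  "CB r V S d = {\<kappa>. \<kappa> 1 = d \<and> bij_betw \<kappa> (V-{1}) S \<and> (\<forall>v. v \<notin> V \<longrightarrow> \<kappa> v = 0)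
      \<and> (\<forall>p\<in>V-{1}. \<kappa> p = d \<longrightarrow> r < p)}"

definition FB :: "nat \<Rightarrow> nat \<Rightarrow> int poly" where
  "FB N k = qfact (N - 1) * monom 1 k * qint (N - k)"

lemma CB_in: "\<kappa> \<in> CB r V S d \<Longrightarrow> v \<in> V - {1} \<Longrightarrow> \<kappa> v \<in> S"
  unfolding CB_def bij_betw_def by auto

lemma finite_CB: assumes "finite V" "finite S" shows "finite (CB r V S d)"
proof -
  have "CB r V S d \<subseteq> {f. \<forall>x. (x \<in> V \<longrightarrow> f x \<in> insert d S) \<and> (x \<notin> V \<longrightarrow> f x = 0)}"
    unfolding CB_def bij_betw_def by auto
  then show ?thesis using finite_set_of_finite_funs[of V "insert d S" 0] assms finite_subset by blast
qed

lemma CB_decomp1: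
  assumes "M \<in> S" "1 \<in> V"
  shows "CB r V S M = (\<lambda>(p,\<kappa>). \<kappa>(p:=M, 1:=M)) ` Sigma {w\<in>V-{1}. r < w} (\<lambda>p. Bs (V-{1}-{p}) (S-{M}))"
    and "inj_on (\<lambda>(p,\<kappa>). \<kappa>(p:=M, 1:=M)) (Sigma {w\<in>V-{1}. r < w} (\<lambda>p. Bs (V-{1}-{p}) (S-{M})))"
proof -
  show "CB r V S M = (\<lambda>(p,\<kappa>). \<kappa>(p:=M, 1:=M)) ` Sigma {w\<in>V-{1}. r < w} (\<lambda>p. Bs (V-{1}-{p}) (S-{M}))"
  proof
    show "CB r V S M \<subseteq> (\<lambda>(p,\<kappa>). \<kappa>(p:=M, 1:=M)) ` Sigma {w\<in>V-{1}. r < w} (\<lambda>p. Bs (V-{1}-{p}) (S-{M}))"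
    proof
      fix \<kappa> assume k: "\<kappa> \<in> CB r V S M"
      then have b: "bij_betw \<kappa> (V-{1}) S" and k1: "\<kappa> 1 = M" and z: "\<forall>v. v \<notin> V \<longrightarrow> \<kappa> v = 0"
        and c: "\<forall>p\<in>V-{1}. \<kappa> p = M \<longrightarrow> r < p" by (auto simp: CB_def)
      have "M \<in> \<kappa> ` (V-{1})" using b assms(1) by (simp add: bij_betw_def)
      then obtain p where p: "p \<in> V-{1}" "\<kappa> p = M" by auto
      have rp: "r < p" using c p by auto
      have "bij_betw (\<kappa>(p:=0)) (V-{1} - {p}) (S - {M})" using bij_rem[OF b p(1)] p by simp
      then have "bij_betw (\<kappa>(p:=0, 1:=0)) (V-{1} - {p}) (S - {M})"
        by (rule iffD1[OF bij_betw_cong, rotated]) auto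
      moreover have "\<forall>v. v \<notin> V-{1}-{p} \<longrightarrow> (\<kappa>(p:=0, 1:=0)) v = 0" using z by auto
      ultimately have "\<kappa>(p:=0, 1:=0) \<in> Bs (V-{1}-{p}) (S-{M})" by (simp add: Bs_def)
      moreover have "\<kappa> = (\<kappa>(p:=0, 1:=0))(p:=M, 1:=M)" using p k1 by auto
      ultimately show "\<kappa> \<in> (\<lambda>(p,\<kappa>). \<kappa>(p:=M, 1:=M)) ` Sigma {w\<in>V-{1}. r < w} (\<lambda>p. Bs (V-{1}-{p}) (S-{M}))"
        using p(1) rp by (auto intro!: image_eqI[where x="(p, \<kappa>(p:=0, 1:=0))"])
    qed
  next
    show "(\<lambda>(p,\<kappa>). \<kappa>(p:=M, 1:=M)) ` Sigma {w\<in>V-{1}. r < w} (\<lambda>p. Bs (V-{1}-{p}) (S-{M})) \<subseteq> CB r V S M"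
    proof (rule subsetI)
      fix x assume "x \<in> (\<lambda>(p,\<kappa>). \<kappa>(p:=M, 1:=M)) ` Sigma {w\<in>V-{1}. r < w} (\<lambda>p. Bs (V-{1}-{p}) (S-{M}))"
      then obtain p \<kappa> where p: "p \<in> V" "p \<noteq> 1" "r < p" and k: "\<kappa> \<in> Bs (V-{1}-{p}) (S-{M})"
        and x: "x = \<kappa>(p:=M, 1:=M)" by auto
      have "bij_betw (\<kappa>(p:=M)) (insert p (V-{1}-{p})) (insert M (S-{M}))"
        by (rule bij_upd) (use k in \<open>auto simp: Bs_def\<close>)
      then have "bij_betw (\<kappa>(p:=M)) (V-{1}) S" using p assms by (simp add: insert_absorb)
      then have "bij_betw (\<kappa>(p:=M, 1:=M)) (V-{1}) S"
        by (rule iffD1[OF bij_betw_cong, rotated]) auto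
      moreover have "\<forall>v. v \<notin> V \<longrightarrow> (\<kappa>(p:=M, 1:=M)) v = 0" using Bs_out[OF k] p assms by auto
      moreover have "\<forall>q\<in>V-{1}. (\<kappa>(p:=M, 1:=M)) q = M \<longrightarrow> r < q"
      proof (intro ballI impI)
        fix q assume q: "q \<in> V-{1}" "(\<kappa>(p:=M, 1:=M)) q = M"
        show "r < q"
        proof (cases "q = p")
          case False
          then have "\<kappa> q \<in> S - {M}" using Bs_in[OF k] q by auto
          then show ?thesis using q False by auto
        qed (use p in auto)
      qed
      ultimately show "x \<in> CB r V S M" by (simp add: CB_def x)
    qed
  qed
  show "inj_on (\<lambda>(p,\<kappa>). \<kappa>(p:=M, 1:=M)) (Sigma {w\<in>V-{1}. r < w} (\<lambda>p. Bs (V-{1}-{p}) (S-{M})))"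
  proof (rule inj_onI)
    fix x y assume x: "x \<in> Sigma {w\<in>V-{1}. r < w} (\<lambda>p. Bs (V-{1}-{p}) (S-{M}))"
      and y: "y \<in> Sigma {w\<in>V-{1}. r < w} (\<lambda>p. Bs (V-{1}-{p}) (S-{M}))"
      and e: "(\<lambda>(p,\<kappa>). \<kappa>(p:=M, 1:=M)) x = (\<lambda>(p,\<kappa>). \<kappa>(p:=M, 1:=M)) y"
    obtain p1 k1 where x1: "x = (p1, k1)" by (cases x)
    obtain p2 k2 where y1: "y = (p2, k2)" by (cases y)
    have p1: "p1 \<in> V" "p1 \<noteq> 1" "k1 \<in> Bs (V-{1}-{p1}) (S-{M})" using x x1 by auto
    have p2: "p2 \<in> V" "p2 \<noteq> 1" "k2 \<in> Bs (V-{1}-{p2}) (S-{M})" using y y1 by auto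
    have eq: "k1(p1:=M, 1:=M) = k2(p2:=M, 1:=M)" using e x1 y1 by simp
    have "p1 = p2"
    proof (rule ccontr)
      assume "p1 \<noteq> p2"
      then have "k2 p1 = M" using fun_cong[OF eq, of p1] p1 by simp
      moreover have "k2 p1 \<in> S - {M}" using Bs_in[OF p2(3)] p1 \<open>p1 \<noteq> p2\<close> by auto
      ultimately show False by simp
    qed
    moreover have "k1 = k2"
    proof
      fix v show "k1 v = k2 v"
        using fun_cong[OF eq, of v] Bs_out[OF p1(3), of p1] Bs_out[OF p2(3), of p2]
          Bs_out[OF p1(3), of 1] Bs_out[OF p2(3), of 1] \<open>p1 = p2\<close>
        by (cases "v = p1"; cases "v = 1") auto
    qed
    ultimately show "x = y" using x1 y1 by simp
  qed
qed

lemma CB_decomp2: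
  assumes "M \<in> S" "1 \<in> V" "d \<noteq> M"
  shows "CB r V S d = (\<lambda>(p,\<kappa>). \<kappa>(p:=M)) ` Sigma (V-{1}) (\<lambda>p. CB r (V-{p}) (S-{M}) d)"
    and "inj_on (\<lambda>(p,\<kappa>). \<kappa>(p:=M)) (Sigma (V-{1}) (\<lambda>p. CB r (V-{p}) (S-{M}) d))"
proof -
  show "CB r V S d = (\<lambda>(p,\<kappa>). \<kappa>(p:=M)) ` Sigma (V-{1}) (\<lambda>p. CB r (V-{p}) (S-{M}) d)"
  proof
    show "CB r V S d \<subseteq> (\<lambda>(p,\<kappa>). \<kappa>(p:=M)) ` Sigma (V-{1}) (\<lambda>p. CB r (V-{p}) (S-{M}) d)"
    proof
      fix \<kappa> assume k: "\<kappa> \<in> CB r V S d"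
      then have b: "bij_betw \<kappa> (V-{1}) S" and k1: "\<kappa> 1 = d" and z: "\<forall>v. v \<notin> V \<longrightarrow> \<kappa> v = 0"
        and c: "\<forall>p\<in>V-{1}. \<kappa> p = d \<longrightarrow> r < p" by (auto simp: CB_def)
      have "M \<in> \<kappa> ` (V-{1})" using b assms(1) by (simp add: bij_betw_def)
      then obtain p where p: "p \<in> V-{1}" "\<kappa> p = M" by auto
      have "bij_betw (\<kappa>(p:=0)) (V-{1} - {p}) (S - {M})" using bij_rem[OF b p(1)] p by simp
      moreover have "V-{1}-{p} = V-{p}-{1}" by auto
      ultimately have "bij_betw (\<kappa>(p:=0)) (V-{p}-{1}) (S - {M})" by simp
      moreover have "\<forall>v. v \<notin> V-{p} \<longrightarrow> (\<kappa>(p:=0)) v = 0" using z by auto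
      moreover have "(\<kappa>(p:=0)) 1 = d" using k1 p by auto
      moreover have "\<forall>q\<in>V-{p}-{1}. (\<kappa>(p:=0)) q = d \<longrightarrow> r < q" using c by auto
      ultimately have "\<kappa>(p:=0) \<in> CB r (V-{p}) (S-{M}) d" by (simp add: CB_def)
      moreover have "\<kappa> = (\<kappa>(p:=0))(p:=M)" using p by auto
      ultimately show "\<kappa> \<in> (\<lambda>(p,\<kappa>). \<kappa>(p:=M)) ` Sigma (V-{1}) (\<lambda>p. CB r (V-{p}) (S-{M}) d)"
        using p(1) by (auto intro!: image_eqI[where x="(p, \<kappa>(p:=0))"])
    qed
  next
    show "(\<lambda>(p,\<kappa>). \<kappa>(p:=M)) ` Sigma (V-{1}) (\<lambda>p. CB r (V-{p}) (S-{M}) d) \<subseteq> CB r V S d"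
    proof (rule subsetI)
      fix x assume "x \<in> (\<lambda>(p,\<kappa>). \<kappa>(p:=M)) ` Sigma (V-{1}) (\<lambda>p. CB r (V-{p}) (S-{M}) d)"
      then obtain p \<kappa> where p: "p \<in> V" "p \<noteq> 1" and k: "\<kappa> \<in> CB r (V-{p}) (S-{M}) d"
        and x: "x = \<kappa>(p:=M)" by auto
      have kk: "\<kappa> 1 = d" "bij_betw \<kappa> (V-{p}-{1}) (S-{M})" "\<forall>v. v \<notin> V-{p} \<longrightarrow> \<kappa> v = 0"
        "\<forall>q\<in>V-{p}-{1}. \<kappa> q = d \<longrightarrow> r < q" using k by (auto simp: CB_def)
      have "V-{p}-{1} = V-{1}-{p}" by auto
      then have "bij_betw (\<kappa>(p:=M)) (insert p (V-{1}-{p})) (insert M (S-{M}))"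
        using kk(2) by (intro bij_upd) auto
      then have "bij_betw (\<kappa>(p:=M)) (V-{1}) S" using p assms by (simp add: insert_absorb)
      moreover have "\<forall>v. v \<notin> V \<longrightarrow> (\<kappa>(p:=M)) v = 0" using kk(3) p by auto
      moreover have "(\<kappa>(p:=M)) 1 = d" using kk(1) p by auto
      moreover have "\<forall>q\<in>V-{1}. (\<kappa>(p:=M)) q = d \<longrightarrow> r < q" using kk(4) assms(3) by auto
      ultimately show "x \<in> CB r V S d" by (simp add: CB_def x)
    qed
  qed
  show "inj_on (\<lambda>(p,\<kappa>). \<kappa>(p:=M)) (Sigma (V-{1}) (\<lambda>p. CB r (V-{p}) (S-{M}) d))"
  proof (rule inj_onI)
    fix x y assume x: "x \<in> Sigma (V-{1}) (\<lambda>p. CB r (V-{p}) (S-{M}) d)"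
      and y: "y \<in> Sigma (V-{1}) (\<lambda>p. CB r (V-{p}) (S-{M}) d)"
      and e: "(\<lambda>(p,\<kappa>). \<kappa>(p:=M)) x = (\<lambda>(p,\<kappa>). \<kappa>(p:=M)) y"
    obtain p1 k1 where x1: "x = (p1, k1)" by (cases x)
    obtain p2 k2 where y1: "y = (p2, k2)" by (cases y)
    have p1: "p1 \<in> V" "p1 \<noteq> 1" "k1 \<in> CB r (V-{p1}) (S-{M}) d" using x x1 by auto
    have p2: "p2 \<in> V" "p2 \<noteq> 1" "k2 \<in> CB r (V-{p2}) (S-{M}) d" using y y1 by auto
    have eq: "k1(p1:=M) = k2(p2:=M)" using e x1 y1 by simp
    have z1: "k1 p1 = 0" "k2 p2 = 0" using p1(3) p2(3) by (auto simp: CB_def)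
    have "p1 = p2"
    proof (rule ccontr)
      assume "p1 \<noteq> p2"
      then have "k2 p1 = M" using fun_cong[OF eq, of p1] by simp
      moreover have "k2 p1 \<in> S - {M}" using CB_in[OF p2(3)] p1 \<open>p1 \<noteq> p2\<close> by auto
      ultimately show False by simp
    qed
    moreover have "k1 = k2"
    proof
      fix v show "k1 v = k2 v"
        using fun_cong[OF eq, of v] z1 \<open>p1 = p2\<close> by (cases "v = p1") auto
    qed
    ultimately show "x = y" using x1 y1 by simp
  qed
qed



lemma algB: fixes F A B C X Xj :: "'a::comm_ring_1"
  shows "F * (A + X * Xj * B) * (X * Xj) * C = X * A * (F * Xj * C) + X * Xj * C * (F * (X * Xj) * B)"
  by (simp add: algebra_simps)

lemma FB_rec:
  assumes "2 \<le> N" "k \<le> N"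
  shows "FB N k = monom 1 1 * qint k * FB (N-1) (k-1) + monom 1 k * qint (N-k) * FB (N-1) k"
proof -
  obtain m where N: "N = m + 2" using assms by (intro that[of "N-2"]) auto
  show ?thesis
  proof (cases k)
    case 0
    then show ?thesis by (simp add: FB_def N qfact_Suc algebra_simps)
  next
    case (Suc j)
    show ?thesis
    proof (cases "j \<le> m")
      case True
      have q: "qint (Suc m) = qint (Suc j) + monom 1 (Suc j) * qint (m - j)"
        using qint_add[of "Suc j" "m - j"] True by simp
      have mS: "monom 1 (Suc j) = (monom 1 1 * monom 1 j :: int poly)" by (simp add: mult_monom)
      have e1: "FB N k = qfact m * qint (Suc m) * monom 1 (Suc j) * qint (Suc m - j)"
        by (simp add: FB_def N Suc qfact_Suc ac_simps)
      have e2: "FB (N-1) (k-1) = qfact m * monom 1 j * qint (Suc m - j)"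
        by (simp add: FB_def N Suc)
      have e3: "FB (N-1) k = qfact m * (monom 1 1 * monom 1 j) * qint (m - j)"
        by (simp add: FB_def N Suc mult_monom)
      have e4: "monom 1 k * qint (N-k) = monom 1 1 * monom 1 j * qint (Suc m - j)"
        by (simp add: N Suc mult_monom)
      show ?thesis unfolding e1 e2 e3 e4 q mS unfolding Suc by (rule algB)
    next
      case False
      then have "j = Suc m" using assms Suc N by simp
      then show ?thesis by (simp add: FB_def N Suc)
    qed
  qed
qed

lemma LB:
  assumes "finite V" "1 \<in> V" "0 \<notin> V" "finite S" "card S = card V - 1" "d \<in> S"
  shows "(\<Sum>\<kappa>\<in>CB r V S d. monom 1 (asc V (gE r) \<kappa>)) = FB (card V - 1) (card {w\<in>V-{1}. w \<le> r})"
  using assms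
proof (induct "card V" arbitrary: V S rule: less_induct)
  case less
  define W where "W = V - {1}"
  define N where "N = card V - 1"
  define k where "k = card {w\<in>W. w \<le> r}"
  have fW: "finite W" using less.prems(1) by (simp add: W_def)
  have cW: "card W = N" using less.prems(1,2) by (simp add: W_def N_def)
  have "S \<noteq> {}" using less.prems by auto
  define M where "M = Max S"
  have M: "M \<in> S" using less.prems(4) \<open>S \<noteq> {}\<close> by (simp add: M_def)
  have cSM: "card (S - {M}) = N - 1" using less.prems(4,5) M by (simp add: N_def)
  have lt: "\<kappa> i < M" if "\<kappa> \<in> Bs U (S - {M})" "i \<in> U" for \<kappa> U i
    using Bs_lt_Max[OF less.prems(4)] that unfolding M_def by blast
  have kN: "k \<le> N" unfolding k_def cW[symmetric] by (rule card_mono[OF fW]) auto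
  have g: "FB (card V - 1) (card {w\<in>V-{1}. w \<le> r}) = FB N k" by (simp add: N_def k_def W_def)
  show ?case
  proof (cases "d = M")
    case True
    have dec0: "(\<Sum>\<kappa>\<in>CB r V S M. monom 1 (asc V (gE r) \<kappa>)) =
       (\<Sum>p\<in>{w\<in>V-{1}. r < w}. \<Sum>\<kappa>\<in>Bs (V-{1}-{p}) (S-{M}). monom 1 (asc V (gE r) ((\<lambda>(p,\<kappa>). \<kappa>(p:=M, 1:=M)) (p, \<kappa>))))"
      by (rule sum_Sigma_reindex[OF _ _ CB_decomp1(2)[OF M less.prems(2)] CB_decomp1(1)[OF M less.prems(2)]])
        (use less.prems finite_Bs in auto)
    have dec: "(\<Sum>\<kappa>\<in>CB r V S d. monom 1 (asc V (gE r) \<kappa>)) =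
       (\<Sum>p\<in>{w\<in>V-{1}. r < w}. \<Sum>\<kappa>\<in>Bs (V-{1}-{p}) (S-{M}). monom 1 (asc V (gE r) (\<kappa>(p:=M, 1:=M))))"
      using dec0 True by simp
    have inner: "(\<Sum>\<kappa>\<in>Bs (V-{1}-{p}) (S-{M}). monom 1 (asc V (gE r) (\<kappa>(p:=M, 1:=M))))
        = monom 1 (rk W p) * qfact (N - 1)" if p: "p \<in> {w\<in>V-{1}. r < w}" for p
    proof -
      have pW: "p \<in> W" using p by (simp add: W_def)
      have "(\<Sum>\<kappa>\<in>Bs (W-{p}) (S-{M}). monom 1 (asc V (gE r) (\<kappa>(p:=M, 1:=M))) :: int poly)
          = (\<Sum>\<kappa>\<in>Bs (W-{p}) (S-{M}). monom 1 (rk W p) * monom 1 (asc (W-{p}) (gE r) \<kappa>))"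
      proof (intro sum.cong refl)
        fix \<kappa> assume k: "\<kappa> \<in> Bs (W-{p}) (S-{M})"
        have l: "\<forall>i\<in>W-{p}. \<kappa> i < M" using lt[OF k] by blast
        have "asc V (gE r) (\<kappa>(p:=M, 1:=M)) = asc (V-{1}) (gE r) (\<kappa>(p:=M, 1:=M))"
        proof (rule asc_top1[OF less.prems(1,2,3)])
          show "\<forall>j\<in>V-{1}. (\<kappa>(p:=M, 1:=M)) j \<le> (\<kappa>(p:=M, 1:=M)) 1"
            using l by (auto simp: W_def less_imp_le)
        qed
        also have "\<dots> = asc W (gE r) (\<kappa>(p:=M))" unfolding W_def by (rule asc_cong) auto
        also have "\<dots> = asc (W-{p}) (gE r) \<kappa> + rk W p"
          by (rule asc_top_clique[OF fW pW _ l]) (auto simp: gE_def W_def)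
        finally show "monom 1 (asc V (gE r) (\<kappa>(p:=M, 1:=M))) = monom 1 (rk W p) * (monom 1 (asc (W-{p}) (gE r) \<kappa>) :: int poly)"
          by (simp add: mult_monom add.commute)
      qed
      also have "\<dots> = monom 1 (rk W p) * (\<Sum>\<kappa>\<in>Bs (W-{p}) (S-{M}). monom 1 (asc (W-{p}) (gE r) \<kappa>))"
        by (simp add: sum_distrib_left)
      also have "(\<Sum>\<kappa>\<in>Bs (W-{p}) (S-{M}). monom 1 (asc (W-{p}) (gE r) \<kappa>)) = qfact (card (W-{p}))"
        by (rule clique) (use fW less.prems(4) cW cSM pW in \<open>auto simp: gE_def W_def\<close>)
      also have "card (W-{p}) = N - 1" using cW pW fW by simp
      finally show ?thesis by (simp only: W_def)
    qed
    have "(\<Sum>\<kappa>\<in>CB r V S d. monom 1 (asc V (gE r) \<kappa>)) = (\<Sum>p\<in>{w\<in>W. r < w}. monom 1 (rk W p) * qfact (N - 1))"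
      unfolding dec W_def[symmetric]
    proof (rule sum.cong[OF refl])
      fix p assume "p \<in> {w\<in>W. r < w}"
      then show "(\<Sum>\<kappa>\<in>Bs (W-{p}) (S-{M}). monom 1 (asc V (gE r) (\<kappa>(p:=M, 1:=M)))) = monom 1 (rk W p) * qfact (N - 1)"
        by (intro inner[unfolded W_def[symmetric]]) simp
    qed
    also have "\<dots> = monom 1 k * qint (N - k) * qfact (N - 1)"
      using rk_high[OF fW, of r] by (simp add: sum_distrib_right[symmetric] k_def cW)
    also have "\<dots> = FB N k" by (simp add: FB_def mult_ac)
    finally show ?thesis using g by simp
  next
    case False
    have dM: "d < M" using False less.prems(4,6) by (simp add: M_def order.not_eq_order_implies_strict)
    have ltC: "\<kappa> i < M" if "\<kappa> \<in> CB r U (S - {M}) d" "i \<in> U" for \<kappa> U i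
    proof (cases "i = 1")
      case True then show ?thesis using that dM by (simp add: CB_def)
    next
      case False
      then have "\<kappa> i \<in> S - {M}" using CB_in[OF that(1)] that(2) by simp
      then show ?thesis using Max_ge[OF less.prems(4)] unfolding M_def by fastforce
    qed
    have N2: "2 \<le> N"
    proof -
      have "{d, M} \<subseteq> S" using M less.prems(6) by simp
      then have "card {d, M} \<le> card S" using less.prems(4) by (rule card_mono[rotated])
      then show ?thesis using False less.prems(5) by (simp add: N_def)
    qed
    have dec0: "(\<Sum>\<kappa>\<in>CB r V S d. monom 1 (asc V (gE r) \<kappa>)) =
       (\<Sum>p\<in>V-{1}. \<Sum>\<kappa>\<in>CB r (V-{p}) (S-{M}) d. monom 1 (asc V (gE r) ((\<lambda>(p,\<kappa>). \<kappa>(p:=M)) (p, \<kappa>))))"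
      by (rule sum_Sigma_reindex[OF _ _ CB_decomp2(2)[OF M less.prems(2) False] CB_decomp2(1)[OF M less.prems(2) False]])
        (use less.prems finite_CB in auto)
    have dec: "(\<Sum>\<kappa>\<in>CB r V S d. monom 1 (asc V (gE r) \<kappa>)) =
       (\<Sum>p\<in>V-{1}. \<Sum>\<kappa>\<in>CB r (V-{p}) (S-{M}) d. monom 1 (asc V (gE r) (\<kappa>(p:=M))))"
      using dec0 by simp
    have T2: "(\<Sum>\<kappa>\<in>CB r (V-{p}) (S-{M}) d. monom 1 (asc V (gE r) (\<kappa>(p:=M))))
      = monom 1 (rk W p + (if p \<le> r then 1 else 0)) * FB (N - 1) (if p \<le> r then k - 1 else k)"
      if p: "p \<in> W" for p
    proof -
      have pV: "p \<in> V" "p \<noteq> 1" using p by (auto simp: W_def)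
      have "(\<Sum>\<kappa>\<in>CB r (V-{p}) (S-{M}) d. monom 1 (asc V (gE r) (\<kappa>(p:=M))) :: int poly)
          = (\<Sum>\<kappa>\<in>CB r (V-{p}) (S-{M}) d. monom 1 (rk W p + (if p \<le> r then 1 else 0)) * monom 1 (asc (V-{p}) (gE r) \<kappa>))"
      proof (intro sum.cong refl)
        fix \<kappa> assume k: "\<kappa> \<in> CB r (V-{p}) (S-{M}) d"
        have "asc V (gE r) (\<kappa>(p:=M)) = asc (V-{p}) (gE r) \<kappa> + rk W p + (if p \<le> r then 1 else 0)"
        proof -
          have "\<forall>i\<in>V-{p}. \<kappa> i < M" using ltC[OF k] by blast
          then show ?thesis unfolding W_def by (rule asc_top[OF less.prems(1,2,3) pV])
        qed
        then show "monom 1 (asc V (gE r) (\<kappa>(p:=M))) = monom 1 (rk W p + (if p \<le> r then 1 else 0)) * (monom 1 (asc (V-{p}) (gE r) \<kappa>) :: int poly)"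
          by (simp add: mult_monom add.commute add.left_commute)
      qed
      also have "\<dots> = monom 1 (rk W p + (if p \<le> r then 1 else 0)) * (\<Sum>\<kappa>\<in>CB r (V-{p}) (S-{M}) d. monom 1 (asc (V-{p}) (gE r) \<kappa>))"
        by (simp add: sum_distrib_left)
      also have "(\<Sum>\<kappa>\<in>CB r (V-{p}) (S-{M}) d. monom 1 (asc (V-{p}) (gE r) \<kappa>))
          = FB (card (V-{p}) - 1) (card {w\<in>V-{p}-{1}. w \<le> r})"
      proof (rule less.hyps)
        have "card V > 0" using pV less.prems(1) card_gt_0_iff by blast
        then show "card (V - {p}) < card V" using pV less.prems(1) by simp
      qed (use less.prems pV cSM cW False in \<open>auto simp: W_def N_def\<close>)
      also have "card (V-{p}) - 1 = N - 1" using pV less.prems(1) by (simp add: N_def)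
      also have "card {w\<in>V-{p}-{1}. w \<le> r} = (if p \<le> r then k - 1 else k)"
      proof -
        have "V-{p}-{1} = W-{p}" by (auto simp: W_def)
        then show ?thesis using card_low_rem[OF fW p, of r] by (simp add: k_def)
      qed
      finally show ?thesis .
    qed
    have "(\<Sum>\<kappa>\<in>CB r V S d. monom 1 (asc V (gE r) \<kappa>)) =
        (\<Sum>p\<in>W. monom 1 (rk W p + (if p \<le> r then 1 else 0)) * FB (N - 1) (if p \<le> r then k - 1 else k))"
      unfolding dec W_def[symmetric] by (rule sum.cong) (simp_all add: T2)
    also have "\<dots> = (\<Sum>p\<in>{w\<in>W. w \<le> r}. monom 1 (rk W p + (if p \<le> r then 1 else 0)) * FB (N - 1) (if p \<le> r then k - 1 else k))
       + (\<Sum>p\<in>{w\<in>W. r < w}. monom 1 (rk W p + (if p \<le> r then 1 else 0)) * FB (N - 1) (if p \<le> r then k - 1 else k))"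
      by (rule split_low_high[OF fW])
    also have "(\<Sum>p\<in>{w\<in>W. w \<le> r}. monom 1 (rk W p + (if p \<le> r then 1 else 0)) * FB (N - 1) (if p \<le> r then k - 1 else k))
        = (\<Sum>p\<in>{w\<in>W. w \<le> r}. monom 1 1 * monom 1 (rk W p) * FB (N - 1) (k - 1))"
      by (rule sum.cong) (simp_all add: mult_monom)
    also have "\<dots> = monom 1 1 * qint k * FB (N - 1) (k - 1)"
      using rk_low[OF fW, of r] by (simp add: sum_distrib_left[symmetric] sum_distrib_right[symmetric] k_def)
    also have "(\<Sum>p\<in>{w\<in>W. r < w}. monom 1 (rk W p + (if p \<le> r then 1 else 0)) * FB (N - 1) (if p \<le> r then k - 1 else k))
        = (\<Sum>p\<in>{w\<in>W. r < w}. monom 1 (rk W p) * FB (N - 1) k)"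
      by (rule sum.cong) auto
    also have "\<dots> = monom 1 k * qint (N - k) * FB (N - 1) k"
      using rk_high[OF fW, of r] by (simp add: sum_distrib_right[symmetric] k_def cW)
    also have "monom 1 1 * qint k * FB (N - 1) (k - 1) + monom 1 k * qint (N - k) * FB (N - 1) k = FB N k"
      using FB_rec[OF N2 kN] by simp
    finally show ?thesis using g by simp
  qed
qed



lemma chrom_cong:
  assumes "\<forall>i\<in>V. \<forall>j\<in>V. i<j \<longrightarrow> (E1 i j \<longleftrightarrow> E2 i j)"
  shows "chrom_qsym V E1 \<alpha> = chrom_qsym V E2 \<alpha>"
proof -
  have p: "proper_coloring V E1 \<kappa> = proper_coloring V E2 \<kappa>" for \<kappa>
    unfolding proper_coloring_def using assms by blast
  have a: "asc V E1 \<kappa> = asc V E2 \<kappa>" for \<kappa>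
    unfolding asc_def by (rule arg_cong[where f=card]) (use assms in blast)
  show ?thesis unfolding chrom_qsym_def p a ..
qed

lemma inj_cnt:
  assumes "inj_on \<kappa> W"
  shows "card {w\<in>W. \<kappa> w = i} = (if i \<in> \<kappa> ` W then 1 else 0)"
proof (cases "i \<in> \<kappa> ` W")
  case True
  then obtain w where w: "w \<in> W" "\<kappa> w = i" by auto
  then have "{w\<in>W. \<kappa> w = i} = {w}" using assms by (auto simp: inj_on_def)
  then show ?thesis using True by simp
next
  case False
  then have e: "{w\<in>W. \<kappa> w = i} = {}" by auto
  show ?thesis unfolding e using False by simp
qed

definition isA :: "nat \<Rightarrow> nat set \<Rightarrow> (nat \<Rightarrow> nat) \<Rightarrow> bool" where
  "isA n S \<alpha> \<longleftrightarrow> finite S \<and> 0 \<notin> S \<and> card S = n \<and> (\<forall>i. \<alpha> i = (if i \<in> S then 1 else 0))"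

definition isB :: "nat \<Rightarrow> nat set \<Rightarrow> nat \<Rightarrow> (nat \<Rightarrow> nat) \<Rightarrow> bool" where
  "isB n S d \<alpha> \<longleftrightarrow> finite S \<and> 0 \<notin> S \<and> card S = n - 1 \<and> d \<in> S \<and>
     (\<forall>i. \<alpha> i = (if i \<in> S then 1 else 0) + (if i = d then 1 else 0))"

lemma isA_unique: "isA n S \<alpha> \<Longrightarrow> S = {i. \<alpha> i \<noteq> 0}"
  unfolding isA_def by auto

lemma isB_unique: "isB n S d \<alpha> \<Longrightarrow> S = {i. \<alpha> i \<noteq> 0} \<and> d \<in> S \<and> \<alpha> d = 2"
  unfolding isB_def by auto

lemma nz_mem: "x \<in> T \<Longrightarrow> 0 \<notin> T \<Longrightarrow> 0 < (x::nat)"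
  by (cases x) auto

lemma subset_one_iff: "(T \<subseteq> {Suc 0..}) = (0 \<notin> T)"
proof
  assume "T \<subseteq> {Suc 0..}" then show "0 \<notin> T" by auto
next
  assume h: "0 \<notin> T"
  show "T \<subseteq> {Suc 0..}"
  proof
    fix x assume x: "x \<in> T"
    have "x \<noteq> 0"
    proof
      assume "x = 0" then show False using x h by simp
    qed
    then show "x \<in> {Suc 0..}" by simp
  qed
qed

lemma e1_set: "{Ss :: nat set list. length Ss = length [n] \<and>
      (\<forall>k<length [n]. Ss!k \<subseteq> {1..} \<and> finite (Ss!k) \<and> card (Ss!k) = [n]!k) \<and>
      (\<forall>i. \<alpha> i = length (filter (\<lambda>S. i \<in> S) Ss))}
    = (\<lambda>T. [T]) ` {T. isA n T \<alpha>}"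
proof (rule set_eqI, rule iffI)
  fix Ss assume H: "Ss \<in> {Ss :: nat set list. length Ss = length [n] \<and>
      (\<forall>k<length [n]. Ss!k \<subseteq> {1..} \<and> finite (Ss!k) \<and> card (Ss!k) = [n]!k) \<and>
      (\<forall>i. \<alpha> i = length (filter (\<lambda>S. i \<in> S) Ss))}"
  then obtain T where T: "Ss = [T]" by (auto simp: length_Suc_conv)
  then have "isA n T \<alpha>" using H by (auto simp: isA_def subset_one_iff)
  then show "Ss \<in> (\<lambda>T. [T]) ` {T. isA n T \<alpha>}" using T by auto
next
  fix Ss assume "Ss \<in> (\<lambda>T. [T]) ` {T. isA n T \<alpha>}"
  then obtain T where T: "Ss = [T]" "isA n T \<alpha>" by auto
  then show "Ss \<in> {Ss :: nat set list. length Ss = length [n] \<and>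
      (\<forall>k<length [n]. Ss!k \<subseteq> {1..} \<and> finite (Ss!k) \<and> card (Ss!k) = [n]!k) \<and>
      (\<forall>i. \<alpha> i = length (filter (\<lambda>S. i \<in> S) Ss))}"
    by (auto simp: isA_def subset_one_iff)
qed

lemma e1_val: "e_sym [n] \<alpha> = (if \<exists>S. isA n S \<alpha> then 1 else 0)"
proof -
  have "e_sym [n] \<alpha> = of_nat (card ((\<lambda>T. [T]) ` {T. isA n T \<alpha>}))"
    unfolding e_sym_def e1_set ..
  also have "card ((\<lambda>T. [T]) ` {T. isA n T \<alpha>}) = card {T. isA n T \<alpha>}"
    by (rule card_image) (auto simp: inj_on_def)
  also have "card {T. isA n T \<alpha>} = (if \<exists>S. isA n S \<alpha> then 1 else 0)"
  proof (cases "\<exists>S. isA n S \<alpha>")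
    case True
    then obtain S where S: "isA n S \<alpha>" by auto
    then have "{T. isA n T \<alpha>} = {S}" using isA_unique by blast
    then show ?thesis using True by simp
  next
    case False
    then show ?thesis by simp
  qed
  finally show ?thesis by simp
qed

definition L2 :: "nat \<Rightarrow> (nat \<Rightarrow> nat) \<Rightarrow> nat set list set" where
  "L2 n \<alpha> = {Ss :: nat set list. length Ss = length [n - 1, 1] \<and>
      (\<forall>k<length [n - 1, 1]. Ss!k \<subseteq> {1..} \<and> finite (Ss!k) \<and> card (Ss!k) = [n - 1, 1]!k) \<and>
      (\<forall>i. \<alpha> i = length (filter (\<lambda>S. i \<in> S) Ss))}"

lemma L2_mem: "Ss \<in> L2 n \<alpha> \<longleftrightarrow> (\<exists>T1 s. Ss = [T1, {s}] \<and> finite T1 \<and> 0 \<notin> T1 \<and> s \<noteq> 0 \<and> card T1 = n - 1 \<and>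
     (\<forall>i. \<alpha> i = (if i \<in> T1 then 1 else 0) + (if i = s then 1 else 0)))"
proof
  assume H: "Ss \<in> L2 n \<alpha>"
  then obtain T1 T2 where T: "Ss = [T1, T2]" by (auto simp: L2_def length_Suc_conv)
  have H': "finite T1" "0 \<notin> T1" "card T1 = n - 1" "finite T2" "0 \<notin> T2" "card T2 = 1"
    "\<forall>i. \<alpha> i = (if i \<in> T1 then 1 else 0) + (if i \<in> T2 then 1 else 0)"
    using H T by (auto simp: L2_def subset_one_iff less_Suc_eq)
  then obtain s where s: "T2 = {s}" by (auto simp: card_Suc_eq)
  show "\<exists>T1 s. Ss = [T1, {s}] \<and> finite T1 \<and> 0 \<notin> T1 \<and> s \<noteq> 0 \<and> card T1 = n - 1 \<and>
     (\<forall>i. \<alpha> i = (if i \<in> T1 then 1 else 0) + (if i = s then 1 else 0))"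
    using H' T s by (intro exI[of _ T1] exI[of _ s]) auto
next
  assume "\<exists>T1 s. Ss = [T1, {s}] \<and> finite T1 \<and> 0 \<notin> T1 \<and> s \<noteq> 0 \<and> card T1 = n - 1 \<and>
     (\<forall>i. \<alpha> i = (if i \<in> T1 then 1 else 0) + (if i = s then 1 else 0))"
  then obtain T1 s where H: "Ss = [T1, {s}]" "finite T1" "0 \<notin> T1" "s \<noteq> 0" "card T1 = n - 1"
     "\<forall>i. \<alpha> i = (if i \<in> T1 then 1 else 0) + (if i = s then 1 else 0)" by blast
  then show "Ss \<in> L2 n \<alpha>" by (auto simp: L2_def subset_one_iff less_Suc_eq)
qed

lemma e_sym_L2: "e_sym [n - 1, 1] \<alpha> = of_nat (card (L2 n \<alpha>))"
  by (simp only: e_sym_def L2_def)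

lemma e2_A:
  assumes "isA n S \<alpha>" "1 \<le> n"
  shows "e_sym [n - 1, 1] \<alpha> = of_nat n"
proof -
  have S: "finite S" "0 \<notin> S" "card S = n" "\<forall>i. \<alpha> i = (if i \<in> S then 1 else 0)"
    using assms(1) by (auto simp: isA_def)
  have "L2 n \<alpha> = (\<lambda>s. [S - {s}, {s}]) ` S"
  proof (rule set_eqI, rule iffI)
    fix Ss assume "Ss \<in> L2 n \<alpha>"
    then obtain T1 s where H: "Ss = [T1, {s}]" "finite T1" "0 \<notin> T1" "s \<noteq> 0" "card T1 = n - 1"
       "\<forall>i. \<alpha> i = (if i \<in> T1 then 1 else 0) + (if i = s then 1 else 0)" unfolding L2_mem by blast
    have a1: "\<alpha> s = (if s \<in> T1 then 1 else 0) + 1" using H(6) by simp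
    have a2: "\<alpha> s = (if s \<in> S then 1 else 0)" using S(4) by simp
    have s1: "s \<in> S"
    proof (rule ccontr)
      assume "s \<notin> S" then have "\<alpha> s = 0" using a2 by simp
      then show False using a1 by simp
    qed
    have s2: "s \<notin> T1"
    proof
      assume "s \<in> T1" then have "\<alpha> s = 2" using a1 by simp
      then show False using a2 by (cases "s \<in> S") simp_all
    qed
    have sS: "s \<in> S \<and> s \<notin> T1" using s1 s2 by simp
    have "T1 = S - {s}"
    proof (rule set_eqI)
      fix i show "i \<in> T1 \<longleftrightarrow> i \<in> S - {s}"
      proof (cases "i = s")
        case True then show ?thesis using sS by simp
      next
        case False
        have b1: "\<alpha> i = (if i \<in> T1 then 1 else 0)" using H(6) False by simp
        have b2: "\<alpha> i = (if i \<in> S then 1 else 0)" using S(4) by simp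
        show ?thesis using b1 b2 False by (cases "i \<in> T1"; cases "i \<in> S") simp_all
      qed
    qed
    then show "Ss \<in> (\<lambda>s. [S - {s}, {s}]) ` S" using H(1) sS by auto
  next
    fix Ss assume "Ss \<in> (\<lambda>s. [S - {s}, {s}]) ` S"
    then obtain s where s: "s \<in> S" "Ss = [S - {s}, {s}]" by auto
    show "Ss \<in> L2 n \<alpha>" unfolding L2_mem
      using s S nz_mem[OF s(1) S(2)] by (intro exI[of _ "S - {s}"] exI[of _ s]) auto
  qed
  moreover have "card ((\<lambda>s. [S - {s}, {s}]) ` S) = card S" by (rule card_image) (auto simp: inj_on_def)
  ultimately show ?thesis using S(3) unfolding e_sym_L2 by simp
qed

lemma e2_B:
  assumes "isB n S d \<alpha>"
  shows "e_sym [n - 1, 1] \<alpha> = 1"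
proof -
  have S: "finite S" "0 \<notin> S" "card S = n - 1" "d \<in> S"
    "\<forall>i. \<alpha> i = (if i \<in> S then 1 else 0) + (if i = d then 1 else 0)"
    using assms(1) by (auto simp: isB_def)
  have "L2 n \<alpha> = {[S, {d}]}"
  proof (rule set_eqI, rule iffI)
    fix Ss assume "Ss \<in> L2 n \<alpha>"
    then obtain T1 s where H: "Ss = [T1, {s}]" "finite T1" "0 \<notin> T1" "s \<noteq> 0" "card T1 = n - 1"
       "\<forall>i. \<alpha> i = (if i \<in> T1 then 1 else 0) + (if i = s then 1 else 0)" unfolding L2_mem by blast
    have "\<alpha> d = 2" using S by simp
    moreover have "\<alpha> d = (if d \<in> T1 then 1 else 0) + (if d = s then 1 else 0)" using H(6) by blast
    ultimately have e: "(if d \<in> T1 then 1 else 0) + (if d = s then 1 else 0) = (2::nat)" by simp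
    have ds: "d \<in> T1 \<and> s = d"
    proof (cases "d \<in> T1"; cases "d = s")
    qed (use e in simp_all)
    have "T1 = S"
    proof (rule set_eqI)
      fix i show "i \<in> T1 \<longleftrightarrow> i \<in> S"
      proof (cases "i = d")
        case True then show ?thesis using ds S(4) by simp
      next
        case False
        have b1: "\<alpha> i = (if i \<in> T1 then 1 else 0)" using H(6) False ds by simp
        have b2: "\<alpha> i = (if i \<in> S then 1 else 0)" using S(5) False by simp
        show ?thesis using b1 b2 by (cases "i \<in> T1"; cases "i \<in> S") simp_all
      qed
    qed
    then show "Ss \<in> {[S, {d}]}" using H(1) ds by simp
  next
    fix Ss assume "Ss \<in> {[S, {d}]}"
    then have "Ss = [S, {d}]" by simp
    then have "Ss = [S, {d}] \<and> finite S \<and> 0 \<notin> S \<and> d \<noteq> 0 \<and> card S = n - 1 \<and>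
     (\<forall>i. \<alpha> i = (if i \<in> S then 1 else 0) + (if i = d then 1 else 0))"
      using S(1,2,3,5) nz_mem[OF S(4) S(2)] by blast
    then show "Ss \<in> L2 n \<alpha>" unfolding L2_mem by blast
  qed
  then show ?thesis unfolding e_sym_L2 by simp
qed

lemma e2_C:
  assumes "\<not> (\<exists>S. isA n S \<alpha>)" "\<not> (\<exists>S d. isB n S d \<alpha>)" "1 \<le> n"
  shows "e_sym [n - 1, 1] \<alpha> = 0"
proof -
  have "L2 n \<alpha> = {}"
  proof (rule ccontr)
    assume "L2 n \<alpha> \<noteq> {}"
    then obtain Ss where "Ss \<in> L2 n \<alpha>" by auto
    then obtain T1 s where H: "Ss = [T1, {s}]" "finite T1" "0 \<notin> T1" "s \<noteq> 0" "card T1 = n - 1"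
       "\<forall>i. \<alpha> i = (if i \<in> T1 then 1 else 0) + (if i = s then 1 else 0)" unfolding L2_mem by blast
    show False
    proof (cases "s \<in> T1")
      case True
      then have "isB n T1 s \<alpha>" using H by (auto simp: isB_def)
      then show False using assms(2) by blast
    next
      case False
      have c: "card (insert s T1) = n" using H(2,5) False assms(3) by simp
      have a: "\<forall>i. \<alpha> i = (if i \<in> insert s T1 then 1 else 0)"
      proof
        fix i show "\<alpha> i = (if i \<in> insert s T1 then 1 else 0)"
          using H(6)[rule_format, of i] False by (cases "i = s"; cases "i \<in> T1") auto
      qed
      have "isA n (insert s T1) \<alpha>" unfolding isA_def using c a H(2,3,4) by simp
      then show False using assms(1) by blast
    qed
  qed
  then show ?thesis unfolding e_sym_L2 by simp
qed



definition colset :: "nat set \<Rightarrow> nat \<Rightarrow> (nat \<Rightarrow> nat) \<Rightarrow> (nat \<Rightarrow> nat) set" where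
  "colset V r \<alpha> = {\<kappa>. proper_coloring V (gE r) \<kappa> \<and> (\<forall>i\<ge>1. card {v\<in>V. \<kappa> v = i} = \<alpha> i)}"

lemma proper_inj:
  assumes "proper_coloring V (gE r) \<kappa>"
  shows "inj_on \<kappa> (V - {1})"
proof (rule inj_onI, rule ccontr)
  fix a b assume a: "a \<in> V - {1}" and b: "b \<in> V - {1}" and e: "\<kappa> a = \<kappa> b" and ne: "a \<noteq> b"
  have P: "\<forall>i\<in>V. \<forall>j\<in>V. i < j \<and> gE r i j \<longrightarrow> \<kappa> i \<noteq> \<kappa> j"
    using assms by (simp add: proper_coloring_def)
  show False
  proof (cases "a < b")
    case True
    have "gE r a b" using a True by (simp add: gE_def)
    have "\<kappa> a \<noteq> \<kappa> b" by (rule P[rule_format]) (use a b True \<open>gE r a b\<close> in auto)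
    then show False using e by simp
  next
    case False
    then have "b < a" using ne by simp
    have "gE r b a" using b \<open>b < a\<close> by (simp add: gE_def)
    have "\<kappa> b \<noteq> \<kappa> a" by (rule P[rule_format]) (use a b \<open>b < a\<close> \<open>gE r b a\<close> in auto)
    then show False using e by simp
  qed
qed

lemma proper_cnt:
  assumes "proper_coloring V (gE r) \<kappa>" "finite V" "1 \<in> V"
  shows "card {v\<in>V. \<kappa> v = i} = (if \<kappa> 1 = i then 1 else 0) + (if i \<in> \<kappa> ` (V - {1}) then 1 else 0)"
proof -
  have "{v\<in>V. \<kappa> v = i} = (if \<kappa> 1 = i then {1} else {}) \<union> {w\<in>V-{1}. \<kappa> w = i}"
    using assms(3) by auto
  then have A: "card {v\<in>V. \<kappa> v = i} = card (if \<kappa> 1 = i then {1} else {}) + card {w\<in>V-{1}. \<kappa> w = i}"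
    using assms(2) by (simp add: card_Un_disjoint)
  have B: "card {w\<in>V-{1}. \<kappa> w = i} = (if i \<in> \<kappa> ` (V - {1}) then 1 else 0)"
    by (rule inj_cnt[OF proper_inj[OF assms(1)]])
  have C: "card (if \<kappa> 1 = i then {1::nat} else {}) = (if \<kappa> 1 = i then 1 else 0)" by simp
  show ?thesis
  proof (cases "\<kappa> 1 = i")
    case True then show ?thesis using A B by simp
  next
    case False then show ?thesis using A B by simp
  qed
qed

lemma proper_pos: "proper_coloring V E \<kappa> \<Longrightarrow> v \<in> V \<Longrightarrow> 1 \<le> \<kappa> v"
  by (simp add: proper_coloring_def)

lemma colA:
  assumes "finite V" "1 \<in> V" "isA (card V) S \<alpha>"
  shows "colset V r \<alpha> = Bs V S"
proof -
  have S: "finite S" "0 \<notin> S" "card S = card V" "\<forall>i. \<alpha> i = (if i \<in> S then 1 else 0)"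
    using assms(3) by (auto simp: isA_def)
  show ?thesis
  proof (rule set_eqI, rule iffI)
    fix \<kappa> assume "\<kappa> \<in> colset V r \<alpha>"
    then have pc: "proper_coloring V (gE r) \<kappa>" and cnt: "\<forall>i\<ge>1. card {v\<in>V. \<kappa> v = i} = \<alpha> i"
      by (auto simp: colset_def)
    define T where "T = \<kappa> ` (V - {1})"
    have c: "(if \<kappa> 1 = i then 1 else 0) + (if i \<in> T then 1 else 0) = (if i \<in> S then 1 else (0::nat))"
      if "1 \<le> i" for i
    proof -
      have "(if \<kappa> 1 = i then 1 else 0) + (if i \<in> T then 1 else 0) = card {v\<in>V. \<kappa> v = i}"
        unfolding T_def by (rule proper_cnt[OF pc assms(1,2), symmetric])
      also have "\<dots> = \<alpha> i" using cnt that by blast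
      also have "\<dots> = (if i \<in> S then 1 else 0)" using S(4) by blast
      finally show ?thesis .
    qed
    have k1: "1 \<le> \<kappa> 1" using proper_pos[OF pc assms(2)] .
    have nT: "\<kappa> 1 \<notin> T"
    proof
      assume "\<kappa> 1 \<in> T" then show False using c[OF k1] by (cases "\<kappa> 1 \<in> S") simp_all
    qed
    have img: "\<kappa> ` V = S"
    proof
      show "\<kappa> ` V \<subseteq> S"
      proof
        fix x assume "x \<in> \<kappa> ` V"
        then obtain v where v: "v \<in> V" "x = \<kappa> v" by auto
        have x1: "1 \<le> x" using proper_pos[OF pc v(1)] v by simp
        have "\<kappa> 1 = x \<or> x \<in> T" using v T_def by (cases "v = 1") auto
        then show "x \<in> S" using c[OF x1] by (cases "x \<in> S") (auto split: if_splits)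
      qed
    next
      show "S \<subseteq> \<kappa> ` V"
      proof
        fix s assume s: "s \<in> S"
        then have s1: "1 \<le> s" using nz_mem[OF s S(2)] by simp
        have cs: "(if \<kappa> 1 = s then 1 else 0) + (if s \<in> T then 1 else 0) = (1::nat)"
          using c[OF s1] s by simp
        have "\<kappa> 1 = s \<or> s \<in> T"
        proof (cases "\<kappa> 1 = s")
          case False then show ?thesis using cs by (cases "s \<in> T") simp_all
        qed simp
        moreover have "T \<subseteq> \<kappa> ` V" unfolding T_def by auto
        moreover have "\<kappa> 1 \<in> \<kappa> ` V" using assms(2) by simp
        ultimately show "s \<in> \<kappa> ` V" by blast
      qed
    qed
    have i1: "inj_on \<kappa> (V - {1})" by (rule proper_inj[OF pc])
    have i2: "\<kappa> 1 \<notin> \<kappa> ` (V - {1} - {1})" using nT unfolding T_def by simp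
    have "inj_on \<kappa> (insert 1 (V - {1}))" using inj_on_insert[of \<kappa> 1 "V - {1}"] i1 i2 by blast
    moreover have eqV: "insert 1 (V - {1}) = V" using assms(2) by auto
    ultimately have "inj_on \<kappa> V" by simp
    then have "bij_betw \<kappa> V S" using img by (simp add: bij_betw_def)
    moreover have "\<forall>v. v \<notin> V \<longrightarrow> \<kappa> v = 0" using pc by (simp add: proper_coloring_def)
    ultimately show "\<kappa> \<in> Bs V S" by (simp add: Bs_def)
  next
    fix \<kappa> assume k: "\<kappa> \<in> Bs V S"
    then have b: "bij_betw \<kappa> V S" and z: "\<forall>v. v \<notin> V \<longrightarrow> \<kappa> v = 0" by (auto simp: Bs_def)
    have inj: "inj_on \<kappa> V" and img: "\<kappa> ` V = S" using b by (auto simp: bij_betw_def)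
    have "proper_coloring V (gE r) \<kappa>"
      unfolding proper_coloring_def
    proof (intro conjI ballI allI impI)
      fix v assume "v \<in> V"
      then have "\<kappa> v \<in> S" using img by auto
      then show "1 \<le> \<kappa> v" using nz_mem[OF _ S(2)] by (simp add: Suc_le_eq)
    next
      fix v assume "v \<notin> V" then show "\<kappa> v = 0" using z by simp
    next
      fix i j assume "i \<in> V" "j \<in> V" "i < j \<and> gE r i j"
      then show "\<kappa> i \<noteq> \<kappa> j" using inj by (auto simp: inj_on_def)
    qed
    moreover have "\<forall>i\<ge>1. card {v\<in>V. \<kappa> v = i} = \<alpha> i"
      using inj_cnt[OF inj] img S(4) by simp
    ultimately show "\<kappa> \<in> colset V r \<alpha>" by (simp add: colset_def)
  qed
qed

lemma colB:
  assumes "finite V" "1 \<in> V" "0 \<notin> V" "isB (card V) S d \<alpha>"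
  shows "colset V r \<alpha> = CB r V S d"
proof -
  have S: "finite S" "0 \<notin> S" "card S = card V - 1" "d \<in> S"
    "\<forall>i. \<alpha> i = (if i \<in> S then 1 else 0) + (if i = d then 1 else 0)"
    using assms(4) by (auto simp: isB_def)
  show ?thesis
  proof (rule set_eqI, rule iffI)
    fix \<kappa> assume "\<kappa> \<in> colset V r \<alpha>"
    then have pc: "proper_coloring V (gE r) \<kappa>" and cnt: "\<forall>i\<ge>1. card {v\<in>V. \<kappa> v = i} = \<alpha> i"
      by (auto simp: colset_def)
    define T where "T = \<kappa> ` (V - {1})"
    have c: "(if \<kappa> 1 = i then 1 else 0) + (if i \<in> T then 1 else 0) = (if i \<in> S then 1 else 0) + (if i = d then 1 else (0::nat))"
      if "1 \<le> i" for i
    proof -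
      have "(if \<kappa> 1 = i then 1 else 0) + (if i \<in> T then 1 else 0) = card {v\<in>V. \<kappa> v = i}"
        unfolding T_def by (rule proper_cnt[OF pc assms(1,2), symmetric])
      also have "\<dots> = \<alpha> i" using cnt that by blast
      also have "\<dots> = (if i \<in> S then 1 else 0) + (if i = d then 1 else 0)" using S(5) by blast
      finally show ?thesis .
    qed
    have inj: "inj_on \<kappa> (V - {1})" by (rule proper_inj[OF pc])
    have TS: "T \<subseteq> S"
    proof
      fix x assume "x \<in> T"
      then obtain w where w: "w \<in> V - {1}" "x = \<kappa> w" unfolding T_def by auto
      have x1: "1 \<le> x" using proper_pos[OF pc] w by simp
      have cx: "(if \<kappa> 1 = x then 1 else 0) + 1 = (if x \<in> S then 1 else 0) + (if x = d then 1 else (0::nat))"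
        using c[OF x1] \<open>x \<in> T\<close> by simp
      show "x \<in> S"
      proof (rule ccontr)
        assume "x \<notin> S"
        then have "x \<noteq> d" using S(4) by auto
        then show False using cx \<open>x \<notin> S\<close> by simp
      qed
    qed
    have "card T = card (V - {1})" unfolding T_def by (rule card_image[OF inj])
    then have "card T = card S" using S(3) assms(1,2) by simp
    then have TS': "T = S" using card_subset_eq[OF S(1) TS] by simp
    have k1: "1 \<le> \<kappa> 1" using proper_pos[OF pc assms(2)] .
    have "\<kappa> 1 = d"
    proof (rule ccontr)
      assume "\<kappa> 1 \<noteq> d"
      then show False using c[OF k1] TS' by (cases "\<kappa> 1 \<in> S") simp_all
    qed
    moreover have "bij_betw \<kappa> (V - {1}) S" using inj TS' unfolding T_def by (simp add: bij_betw_def)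
    moreover have "\<forall>v. v \<notin> V \<longrightarrow> \<kappa> v = 0" using pc by (simp add: proper_coloring_def)
    moreover have "\<forall>p\<in>V-{1}. \<kappa> p = d \<longrightarrow> r < p"
    proof (intro ballI impI)
      fix p assume p: "p \<in> V - {1}" "\<kappa> p = d"
      show "r < p"
      proof (rule ccontr)
        assume "\<not> r < p"
        then have pr: "p \<le> r" by simp
        have p1: "1 < p" using p(1) assms(3) by (cases p) auto
        then have "gE r 1 p" using pr by (simp add: gE_def)
        then have "\<kappa> 1 \<noteq> \<kappa> p" using pc p(1) assms(2) p1 by (auto simp: proper_coloring_def)
        then show False using p(2) \<open>\<kappa> 1 = d\<close> by simp
      qed
    qed
    ultimately show "\<kappa> \<in> CB r V S d" by (simp add: CB_def)
  next
    fix \<kappa> assume k: "\<kappa> \<in> CB r V S d"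
    then have k1: "\<kappa> 1 = d" and b: "bij_betw \<kappa> (V-{1}) S" and z: "\<forall>v. v \<notin> V \<longrightarrow> \<kappa> v = 0"
      and cond: "\<forall>p\<in>V-{1}. \<kappa> p = d \<longrightarrow> r < p" by (auto simp: CB_def)
    have inj: "inj_on \<kappa> (V - {1})" and img: "\<kappa> ` (V - {1}) = S" using b by (auto simp: bij_betw_def)
    have pc: "proper_coloring V (gE r) \<kappa>"
      unfolding proper_coloring_def
    proof (intro conjI)
      show "\<forall>v\<in>V. 1 \<le> \<kappa> v"
      proof
        fix v assume v: "v \<in> V"
        have "\<kappa> v \<in> S"
        proof (cases "v = 1")
          case True then show ?thesis using k1 S(4) by simp
        next
          case False then show ?thesis using v img by auto
        qed
        then show "1 \<le> \<kappa> v" using nz_mem[OF _ S(2)] by (simp add: Suc_le_eq)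
      qed
      show "\<forall>v. v \<notin> V \<longrightarrow> \<kappa> v = 0" using z by simp
      show "\<forall>i\<in>V. \<forall>j\<in>V. i < j \<and> gE r i j \<longrightarrow> \<kappa> i \<noteq> \<kappa> j"
      proof (intro ballI impI)
        fix i j assume ij: "i \<in> V" "j \<in> V" "i < j \<and> gE r i j"
        show "\<kappa> i \<noteq> \<kappa> j"
        proof (cases "i = 1")
          case True
          then have "j \<le> r" "j \<in> V - {1}" using ij by (auto simp: gE_def)
          then show ?thesis using cond k1 True by auto
        next
          case False
          then have "i \<in> V - {1}" "j \<in> V - {1}" "i \<noteq> j" using ij assms(3) by auto
          then show ?thesis using inj by (auto simp: inj_on_def)
        qed
      qed
    qed
    have "\<forall>i\<ge>1. card {v\<in>V. \<kappa> v = i} = \<alpha> i"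
    proof (intro allI impI)
      fix i :: nat assume "1 \<le> i"
      have "card {v\<in>V. \<kappa> v = i} = (if \<kappa> 1 = i then 1 else 0) + (if i \<in> \<kappa> ` (V - {1}) then 1 else 0)"
        by (rule proper_cnt[OF pc assms(1,2)])
      also have "\<dots> = (if i \<in> S then 1 else 0) + (if i = d then 1 else 0)"
        unfolding img k1 by (cases "d = i") auto
      also have "\<dots> = \<alpha> i" using S(5) by simp
      finally show "card {v\<in>V. \<kappa> v = i} = \<alpha> i" .
    qed
    then show "\<kappa> \<in> colset V r \<alpha>" using pc by (simp add: colset_def)
  qed
qed

lemma colC:
  assumes "finite V" "1 \<in> V" "\<alpha> 0 = 0" "\<not> (\<exists>S. isA (card V) S \<alpha>)" "\<not> (\<exists>S d. isB (card V) S d \<alpha>)"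
  shows "colset V r \<alpha> = {}"
proof (rule ccontr)
  assume "colset V r \<alpha> \<noteq> {}"
  then obtain \<kappa> where "\<kappa> \<in> colset V r \<alpha>" by auto
  then have pc: "proper_coloring V (gE r) \<kappa>" and cnt: "\<forall>i\<ge>1. card {v\<in>V. \<kappa> v = i} = \<alpha> i"
    by (auto simp: colset_def)
  define T where "T = \<kappa> ` (V - {1})"
  have inj: "inj_on \<kappa> (V - {1})" by (rule proper_inj[OF pc])
  have cT: "card T = card V - 1" unfolding T_def using card_image[OF inj] assms(1,2) by simp
  have fT: "finite T" unfolding T_def using assms(1) by simp
  have k1: "\<kappa> 1 \<noteq> 0" using proper_pos[OF pc assms(2)] by simp
  have T0: "0 \<notin> T"
  proof
    assume "0 \<in> T"
    then obtain w where w: "w \<in> V - {1}" "0 = \<kappa> w" unfolding T_def by (rule imageE)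
    then show False using proper_pos[OF pc, of w] by simp
  qed
  have c: "\<alpha> i = (if \<kappa> 1 = i then 1 else 0) + (if i \<in> T then 1 else 0)" for i
  proof (cases "i = 0")
    case True then show ?thesis using assms(3) k1 T0 by simp
  next
    case False
    then have "1 \<le> i" by simp
    then have "\<alpha> i = card {v\<in>V. \<kappa> v = i}" using cnt by simp
    also have "\<dots> = (if \<kappa> 1 = i then 1 else 0) + (if i \<in> T then 1 else 0)"
      unfolding T_def by (rule proper_cnt[OF pc assms(1,2)])
    finally show ?thesis .
  qed
  show False
  proof (cases "\<kappa> 1 \<in> T")
    case True
    have "\<forall>i. \<alpha> i = (if i \<in> T then 1 else 0) + (if i = \<kappa> 1 then 1 else 0)"
    proof
      fix i show "\<alpha> i = (if i \<in> T then 1 else 0) + (if i = \<kappa> 1 then 1 else 0)"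
        using c[of i] by (cases "i = \<kappa> 1") auto
    qed
    then have "isB (card V) T (\<kappa> 1) \<alpha>" unfolding isB_def using fT T0 cT True by simp
    then show False using assms(5) by blast
  next
    case False
    have "\<forall>i. \<alpha> i = (if i \<in> insert (\<kappa> 1) T then 1 else 0)"
    proof
      fix i show "\<alpha> i = (if i \<in> insert (\<kappa> 1) T then 1 else 0)"
        using c[of i] False by (cases "i = \<kappa> 1") auto
    qed
    moreover have "card (insert (\<kappa> 1) T) = card V"
    proof -
      have "card V > 0" using assms(1,2) card_gt_0_iff by blast
      then show ?thesis using cT fT False by simp
    qed
    ultimately have "isA (card V) (insert (\<kappa> 1) T) \<alpha>" unfolding isA_def using fT T0 k1 by simp
    then show False using assms(4) by blast
  qed
qed



lemma algA: fixes c F K Xk Y Q :: "'a::comm_ring_1"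
  shows "c * (F * (K + Xk * Y)) - F * K * (c - Q) = F * (Q * K * 1 + Xk * Y * c)"
  by (simp add: algebra_simps)

theorem corollary4p3:
  fixes n r :: nat and m :: "nat \<Rightarrow> nat"
  assumes "2 \<le> n" and "1 \<le> r" and "r \<le> n - 1" and "m 1 = r"
    and "\<forall>i. 2 \<le> i \<and> i \<le> n - 1 \<longrightarrow> m i = n"
  shows "\<forall>\<alpha>\<in>monomial_exps.
    chrom_qsym {1..n} (nuio_edge m) \<alpha> =
      qfact (n - 2) * (qint n * qint (r - 1) * e_sym [n] \<alpha>
                       + monom 1 (r - 1) * qint (n - r) * e_sym [n - 1, 1] \<alpha>)"
proof
  fix \<alpha> assume "\<alpha> \<in> monomial_exps"
  then have a0: "\<alpha> 0 = 0" by (simp add: monomial_exps_def)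
  define V where "V = {1..n}"
  have fV: "finite V" and V1: "1 \<in> V" and V0: "0 \<notin> V" and cV: "card V = n"
    using assms(1) by (auto simp: V_def)
  have h1: "chrom_qsym V (nuio_edge m) \<alpha> = chrom_qsym V (gE r) \<alpha>"
  proof (rule chrom_cong, intro ballI impI)
    fix i j assume i: "i \<in> V" and j: "j \<in> V" and ij: "i < j"
    show "nuio_edge m i j \<longleftrightarrow> gE r i j"
    proof (cases "i = 1")
      case True then show ?thesis using assms(4) by (simp add: nuio_edge_def gE_def)
    next
      case False
      then have "2 \<le> i" "i \<le> n - 1" using i j ij by (auto simp: V_def)
      then have "m i = n" using assms(5) by blast
      then show ?thesis using False j ij by (simp add: nuio_edge_def gE_def V_def)
    qed
  qed
  have h2: "chrom_qsym V (gE r) \<alpha> = (\<Sum>\<kappa>\<in>colset V r \<alpha>. monom 1 (asc V (gE r) \<kappa>))"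
    unfolding chrom_qsym_def colset_def ..
  have kk: "card {w\<in>V-{1}. w \<le> r} = r - 1"
  proof -
    have "{w\<in>V-{1}. w \<le> r} = {2..r}" using assms(3) by (auto simp: V_def)
    then show ?thesis by simp
  qed
  have LHS: "chrom_qsym {1..n} (nuio_edge m) \<alpha> = (\<Sum>\<kappa>\<in>colset V r \<alpha>. monom 1 (asc V (gE r) \<kappa>))"
    using h1 h2 by (simp add: V_def)
  have excl: "\<not> (isA n S \<alpha> \<and> isB n S' d \<alpha>)" for S S' d
  proof
    assume h: "isA n S \<alpha> \<and> isB n S' d \<alpha>"
    have x: "\<alpha> d = (if d \<in> S then 1 else 0)" using h unfolding isA_def by blast
    have y: "\<alpha> d = 2"
    proof -
      have "\<alpha> d = (if d \<in> S' then 1 else 0) + (if d = d then 1 else 0)" using h unfolding isB_def by blast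
      moreover have "d \<in> S'" using h unfolding isB_def by blast
      ultimately show ?thesis by simp
    qed
    show False using x y by (cases "d \<in> S") simp_all
  qed
  show "chrom_qsym {1..n} (nuio_edge m) \<alpha> =
      qfact (n - 2) * (qint n * qint (r - 1) * e_sym [n] \<alpha>
                       + monom 1 (r - 1) * qint (n - r) * e_sym [n - 1, 1] \<alpha>)"
  proof (cases "\<exists>S. isA n S \<alpha>")
    case True
    then obtain S where S: "isA n S \<alpha>" by blast
    have cS: "card S = card V" "finite S" using S cV by (auto simp: isA_def)
    have "chrom_qsym {1..n} (nuio_edge m) \<alpha> = FA (n - 1) (r - 1)"
      unfolding LHS colA[OF fV V1 S[folded cV]] using LA[OF fV V1 V0 cS(2) cS(1), of r] cV kk by simp
    also have "\<dots> = qfact (n - 2) * (qint n * qint (r - 1) * 1 + monom 1 (r - 1) * qint (n - r) * of_nat n)"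
    proof -
      have e1: "n - 1 + 1 = n" using assms(1) by simp
      have e2: "n - 1 - 1 = n - 2" by simp
      have e3: "qfact (n - 1) = qfact (n - 2) * (qint (r - 1) + monom 1 (r - 1) * qint (n - r))"
      proof -
        have "n - 1 = Suc (n - 2)" using assms(1) by simp
        then have "qfact (n - 1) = qfact (n - 2) * qint (n - 1)" by (simp add: qfact_Suc)
        moreover have "qint (n - 1) = qint (r - 1) + monom 1 (r - 1) * qint (n - r)"
        proof -
          have "n - 1 = (r - 1) + (n - r)" using assms(2,3) by simp
          then show ?thesis using qint_add[of "r - 1" "n - r"] by simp
        qed
        ultimately show ?thesis by simp
      qed
      show ?thesis unfolding FA_def e1 e2 e3 by (rule algA)
    qed
    also have "\<dots> = qfact (n - 2) * (qint n * qint (r - 1) * e_sym [n] \<alpha>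
                       + monom 1 (r - 1) * qint (n - r) * e_sym [n - 1, 1] \<alpha>)"
      using e1_val[of n \<alpha>] e2_A[OF S] True assms(1) by simp
    finally show ?thesis .
  next
    case False
    note nA = False
    show ?thesis
    proof (cases "\<exists>S d. isB n S d \<alpha>")
      case True
      then obtain S d where S: "isB n S d \<alpha>" by blast
      have cS: "card S = card V - 1" "finite S" "d \<in> S" using S cV by (auto simp: isB_def)
      have "chrom_qsym {1..n} (nuio_edge m) \<alpha> = FB (n - 1) (r - 1)"
        unfolding LHS colB[OF fV V1 V0 S[folded cV]] using LB[OF fV V1 V0 cS(2) cS(1) cS(3), of r] cV kk by simp
      also have "\<dots> = qfact (n - 2) * (qint n * qint (r - 1) * 0 + monom 1 (r - 1) * qint (n - r) * 1)"
      proof -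
        have e3: "n - 1 - (r - 1) = n - r" using assms(2) by simp
        have e2: "n - 1 - 1 = n - 2" by simp
        show ?thesis unfolding FB_def e2 e3 by simp
      qed
      also have "\<dots> = qfact (n - 2) * (qint n * qint (r - 1) * e_sym [n] \<alpha>
                       + monom 1 (r - 1) * qint (n - r) * e_sym [n - 1, 1] \<alpha>)"
        using e1_val[of n \<alpha>] e2_B[OF S] nA by simp
      finally show ?thesis .
    next
      case False
      have "colset V r \<alpha> = {}" using colC[of V \<alpha> r] fV V1 a0 nA False cV by simp
      then have "chrom_qsym {1..n} (nuio_edge m) \<alpha> = 0" unfolding LHS by simp
      moreover have "e_sym [n] \<alpha> = 0" using e1_val[of n \<alpha>] nA by simp
      moreover have "e_sym [n - 1, 1] \<alpha> = 0" using e2_C[OF nA False] assms(1) by simp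
      ultimately show ?thesis by simp
    qed
  qed
qed

end
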